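(* Let $\{Q(C;\alpha)\}$ be a filtration of simplicial complexes on a finite set $C$ and fix $\alpha\ge0$. Let $G\subseteq Q(C;\alpha)$ be a graph that spans $Q(C;\alpha)$ such that the inclusion induces an isomorphism $H_1(G;\mathbb{Z}_2)\to H_1(Q(C;\alpha);\mathbb{Z}_2)$. Let $(b_i,d_i)$, $i=1,\dots,m$, be all dots (counted with multiplicity) of the persistence diagram $\mathrm{PD}\{Q(C;\alpha)\}$ with $b_i\le\alpha<d_i$. Then the total length of edges of $G$ is at least the total length of edges of $\mathrm{MST}(C;\alpha)$ plus $2\sum_{i=1}^m b_i$.
   Context: A filtration on a finite set $C$: nested finite simplicial complexes $Q(C;\alpha)$, $\alpha\ge0$, with vertex set $C$, each simplex entering at a minimal scale; final complex connected. Edge length $|e|=2\min\{\alpha:e\subset Q(C;\alpha)\}$. $\mathrm{MST}(C)$ is a minimum total length spanning tree on $C$ using filtration edges; $\mathrm{MST}(C;\alpha)$ removes all open edges of length $>2\alpha$. A graph $G$ spans a complex $Q$ on $C$ if $G$ has vertex set $C$, every edge of $G$ is in $Q$, and the inclusion induces a bijection on connected components. $\mathrm{PD}\{Q(C;\alpha)\}$ is the 1-dimensional persistence diagram (with $\mathbb{Z}_2$ coefficients) of the filtration: the multiset of (birth, death) pairs of $H_1$ classes, where a class is born at $\alpha_i$ if not in the image from any earlier scale and dies at $\alpha_j$ when its image merges into the image from scales earlier than its birth. *)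

theory Defs
  imports Complex_Main "HOL-Library.Multiset" "HOL-Library.Extended_Real"
begin

(* Simplicial complexes on vertex type 'a are sets of finite nonempty vertex sets.
   A filtration is given by its final complex S together with the entry scale
   ent sigma of each simplex; Q(C;alpha) = {sigma in S. ent sigma <= alpha}. *)

definition Qle :: "'a set set \<Rightarrow> ('a set \<Rightarrow> real) \<Rightarrow> real \<Rightarrow> 'a set set" where
  "Qle S ent a = {\<sigma>\<in>S. ent \<sigma> \<le> a}"

definition Qlt :: "'a set set \<Rightarrow> ('a set \<Rightarrow> real) \<Rightarrow> real \<Rightarrow> 'a set set" where
  "Qlt S ent a = {\<sigma>\<in>S. ent \<sigma> < a}"

definition edges :: "'a set set \<Rightarrow> 'a set set" where
  "edges K = {\<sigma>\<in>K. card \<sigma> = 2}"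

definition triangles :: "'a set set \<Rightarrow> 'a set set" where
  "triangles K = {\<sigma>\<in>K. card \<sigma> = 3}"

definition conn :: "'a set set \<Rightarrow> 'a \<Rightarrow> 'a \<Rightarrow> bool" where
  "conn E = (\<lambda>x y. {x, y} \<in> E)\<^sup>*\<^sup>*"

definition connected_graph :: "'a set \<Rightarrow> 'a set set \<Rightarrow> bool" where
  "connected_graph V E \<longleftrightarrow> (\<forall>u\<in>V. \<forall>v\<in>V. conn E u v)"

definition comp :: "'a set \<Rightarrow> 'a set set \<Rightarrow> 'a \<Rightarrow> 'a set" where
  "comp V E u = {v\<in>V. conn E u v}"

definition comps :: "'a set \<Rightarrow> 'a set set \<Rightarrow> 'a set set" where
  "comps V E = comp V E ` V"

definition filtration :: "'a set \<Rightarrow> 'a set set \<Rightarrow> ('a set \<Rightarrow> real) \<Rightarrow> bool" where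
  "filtration C S ent \<longleftrightarrow>
     finite C \<and>
     (\<forall>\<sigma>\<in>S. \<sigma> \<noteq> {} \<and> \<sigma> \<subseteq> C) \<and>
     (\<forall>v\<in>C. {v} \<in> S \<and> ent {v} = 0) \<and>
     (\<forall>\<sigma>\<in>S. \<forall>\<tau>. \<tau> \<noteq> {} \<and> \<tau> \<subseteq> \<sigma> \<longrightarrow> \<tau> \<in> S \<and> ent \<tau> \<le> ent \<sigma>) \<and>
     (\<forall>\<sigma>\<in>S. 0 \<le> ent \<sigma>) \<and>
     connected_graph C (edges S)"

(* Z_2 chains are sets of simplices; addition is symmetric difference *)
definition symdiff :: "'b set \<Rightarrow> 'b set \<Rightarrow> 'b set" where
  "symdiff A B = (A - B) \<union> (B - A)"

definition cycles :: "'a set set \<Rightarrow> 'a set set set" where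
  "cycles K = {c. c \<subseteq> edges K \<and> (\<forall>v. even (card {e\<in>c. v \<in> e}))}"

definition bd2 :: "'a set set \<Rightarrow> 'a set set" where
  "bd2 T = {e. card e = 2 \<and> odd (card {t\<in>T. e \<subseteq> t})}"

definition boundaries :: "'a set set \<Rightarrow> 'a set set set" where
  "boundaries K = bd2 ` Pow (triangles K)"

definition hclass :: "'a set set \<Rightarrow> 'a set set \<Rightarrow> 'a set set set" where
  "hclass K c = {c'\<in>cycles K. symdiff c c' \<in> boundaries K}"

definition H1 :: "'a set set \<Rightarrow> 'a set set set set" where
  "H1 K = hclass K ` cycles K"

(* map H_1(K) -> H_1(L) induced by inclusion K \<subseteq> L *)
definition induced :: "'a set set \<Rightarrow> 'a set set \<Rightarrow> 'a set set set \<Rightarrow> 'a set set set" where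
  "induced K L X = hclass L (SOME z. z \<in> X)"

definition dimZ2 :: "'b set \<Rightarrow> nat" where
  "dimZ2 V = (THE n. card V = 2 ^ n)"

definition hrank :: "'a set set \<Rightarrow> 'a set set \<Rightarrow> nat" where
  "hrank K L = dimZ2 (induced K L ` H1 K)"

(* multiplicity of the dot (b,d), b<d finite, in the 1-dim persistence diagram *)
definition mult_fin :: "'a set set \<Rightarrow> ('a set \<Rightarrow> real) \<Rightarrow> real \<Rightarrow> real \<Rightarrow> nat" where
  "mult_fin S ent b d = nat (int (hrank (Qle S ent b) (Qlt S ent d))
      - int (hrank (Qlt S ent b) (Qlt S ent d))
      - int (hrank (Qle S ent b) (Qle S ent d))
      + int (hrank (Qlt S ent b) (Qle S ent d)))"

(* multiplicity of the dot (b,infinity): classes born at b never dying *)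
definition mult_inf :: "'a set set \<Rightarrow> ('a set \<Rightarrow> real) \<Rightarrow> real \<Rightarrow> nat" where
  "mult_inf S ent b = nat (int (hrank (Qle S ent b) S) - int (hrank (Qlt S ent b) S))"

(* PD{Q(C;alpha)}: births/deaths can only occur at entry scales ent ` S *)
definition PD :: "'a set set \<Rightarrow> ('a set \<Rightarrow> real) \<Rightarrow> (real \<times> ereal) multiset" where
  "PD S ent =
     (\<Sum>b\<in>ent ` S. \<Sum>d\<in>ent ` S.
        if b < d then replicate_mset (mult_fin S ent b d) (b, ereal d) else {#})
   + (\<Sum>b\<in>ent ` S. replicate_mset (mult_inf S ent b) (b, \<infinity>))"

definition graph_on :: "'a set \<Rightarrow> 'a set set \<Rightarrow> bool" where
  "graph_on C G \<longleftrightarrow> (\<forall>e\<in>G. card e = 2 \<and> e \<subseteq> C)"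

definition graph_cx :: "'a set \<Rightarrow> 'a set set \<Rightarrow> 'a set set" where
  "graph_cx C G = (\<lambda>v. {v}) ` C \<union> G"

definition spans :: "'a set \<Rightarrow> 'a set set \<Rightarrow> 'a set set \<Rightarrow> bool" where
  "spans C G K \<longleftrightarrow> graph_on C G \<and> G \<subseteq> K \<and>
     bij_betw (\<lambda>X. comp C (edges K) (SOME v. v \<in> X)) (comps C G) (comps C (edges K))"

definition is_tree :: "'a set \<Rightarrow> 'a set set \<Rightarrow> bool" where
  "is_tree C T \<longleftrightarrow> graph_on C T \<and> connected_graph C T \<and>
     (\<forall>e\<in>T. \<forall>u v. e = {u, v} \<longrightarrow> \<not> conn (T - {e}) u v)"

definition elen :: "('a set \<Rightarrow> real) \<Rightarrow> 'a set \<Rightarrow> real" where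
  "elen ent e = 2 * ent e"

definition total_len :: "('a set \<Rightarrow> real) \<Rightarrow> 'a set set \<Rightarrow> real" where
  "total_len ent E = (\<Sum>e\<in>E. elen ent e)"

definition is_MST :: "'a set \<Rightarrow> 'a set set \<Rightarrow> ('a set \<Rightarrow> real) \<Rightarrow> 'a set set \<Rightarrow> bool" where
  "is_MST C S ent T \<longleftrightarrow> is_tree C T \<and> T \<subseteq> edges S \<and>
     (\<forall>T'. is_tree C T' \<and> T' \<subseteq> edges S \<longrightarrow> total_len ent T \<le> total_len ent T')"

definition MST_trunc :: "('a set \<Rightarrow> real) \<Rightarrow> 'a set set \<Rightarrow> real \<Rightarrow> 'a set set" where
  "MST_trunc ent T a = {e\<in>T. elen ent e \<le> 2 * a}"

end

theory Submission
  imports Defs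
begin

definition sg :: "'b set set \<Rightarrow> bool" where
  "sg U \<longleftrightarrow> {} \<in> U \<and> (\<forall>x\<in>U. \<forall>y\<in>U. symdiff x y \<in> U)"

definition ssum :: "'b set set \<Rightarrow> 'b set set \<Rightarrow> 'b set set" where
  "ssum U W = {symdiff u w | u w. u \<in> U \<and> w \<in> W}"

lemma symdiff_comm: "symdiff x y = symdiff y x"
  unfolding symdiff_def by blast
lemma symdiff_assoc: "symdiff (symdiff x y) z = symdiff x (symdiff y z)"
  unfolding symdiff_def by blast
lemma symdiff_self[simp]: "symdiff x x = {}"
  unfolding symdiff_def by blast
lemma symdiff_empty[simp]: "symdiff x {} = x" "symdiff {} x = x"
  unfolding symdiff_def by blast+
lemma symdiff_cancel[simp]: "symdiff x (symdiff x y) = y" "symdiff (symdiff y x) x = y"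
  unfolding symdiff_def by blast+
lemma symdiff_eq_iff: "symdiff x y = z \<longleftrightarrow> y = symdiff x z"
  unfolding symdiff_def by blast
lemma symdiff_inj: "symdiff x y = symdiff x z \<longleftrightarrow> y = z"
  unfolding symdiff_def by blast

lemma sgD: "sg U \<Longrightarrow> {} \<in> U" "sg U \<Longrightarrow> x \<in> U \<Longrightarrow> y \<in> U \<Longrightarrow> symdiff x y \<in> U"
  unfolding sg_def by auto

lemma sg_Int: "sg U \<Longrightarrow> sg W \<Longrightarrow> sg (U \<inter> W)"
  unfolding sg_def by auto

lemma sg_ssum: assumes "sg U" "sg W" shows "sg (ssum U W)"
  unfolding sg_def ssum_def
proof (intro conjI ballI)
  show "{} \<in> {symdiff u w |u w. u \<in> U \<and> w \<in> W}"
    using sgD(1)[OF assms(1)] sgD(1)[OF assms(2)] by (auto intro!: exI[of _ "{}"])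
next
  fix x y assume "x \<in> {symdiff u w |u w. u \<in> U \<and> w \<in> W}" "y \<in> {symdiff u w |u w. u \<in> U \<and> w \<in> W}"
  then obtain u1 w1 u2 w2 where "x = symdiff u1 w1" "y = symdiff u2 w2" "u1 \<in> U" "u2 \<in> U" "w1 \<in> W" "w2 \<in> W"
    by blast
  moreover have "symdiff (symdiff u1 w1) (symdiff u2 w2) = symdiff (symdiff u1 u2) (symdiff w1 w2)"
    unfolding symdiff_def by blast
  ultimately show "symdiff x y \<in> {symdiff u w |u w. u \<in> U \<and> w \<in> W}"
    using sgD(2)[OF assms(1)] sgD(2)[OF assms(2)] by blast
qed

lemma ssum_mono: "U \<subseteq> U' \<Longrightarrow> W \<subseteq> W' \<Longrightarrow> ssum U W \<subseteq> ssum U' W'"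
  unfolding ssum_def by blast

lemma ssum_sub1: "{} \<in> W \<Longrightarrow> U \<subseteq> ssum U W"
  unfolding ssum_def by (force)
lemma ssum_sub2: "{} \<in> U \<Longrightarrow> W \<subseteq> ssum U W"
  unfolding ssum_def by (force)
lemma ssum_le: "sg V \<Longrightarrow> U \<subseteq> V \<Longrightarrow> W \<subseteq> V \<Longrightarrow> ssum U W \<subseteq> V"
  unfolding ssum_def using sgD(2) by blast

lemma ssum_Pow: "U \<subseteq> Pow X \<Longrightarrow> W \<subseteq> Pow X \<Longrightarrow> ssum U W \<subseteq> Pow X"
  unfolding ssum_def symdiff_def by blast

lemma sg_card_pow2_aux:
  assumes "finite X" shows "sg U \<Longrightarrow> U \<subseteq> Pow X \<Longrightarrow> \<exists>n. card U = 2 ^ n"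
  using assms
proof (induction X arbitrary: U rule: finite_induct)
  case empty
  then have "U = {{}}" using sgD(1)[OF empty(1)] by auto
  then show ?case by (intro exI[of _ 0]) simp
next
  case (insert a X)
  define U0 where "U0 = {u\<in>U. a \<notin> u}"
  have sg0: "sg U0"
    unfolding sg_def U0_def
  proof (intro conjI ballI)
    show "{} \<in> {u \<in> U. a \<notin> u}" using sgD(1)[OF insert.prems(1)] by simp
    fix x y assume "x \<in> {u \<in> U. a \<notin> u}" "y \<in> {u \<in> U. a \<notin> u}"
    then show "symdiff x y \<in> {u \<in> U. a \<notin> u}" using sgD(2)[OF insert.prems(1)] by (simp add: symdiff_def)
  qed
  have "U0 \<subseteq> Pow X" using insert.prems(2) unfolding U0_def by auto
  then obtain n where n: "card U0 = 2 ^ n" using insert.IH sg0 by blast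
  have finU0: "finite U0" using \<open>U0 \<subseteq> Pow X\<close> insert(1) finite_subset by blast
  show ?case
  proof (cases "\<exists>x\<in>U. a \<in> x")
    case False
    then have "U = U0" unfolding U0_def by auto
    then show ?thesis using n by blast
  next
    case True
    then obtain x where x: "x \<in> U" "a \<in> x" by blast
    have U: "U = U0 \<union> symdiff x ` U0"
    proof
      show "U \<subseteq> U0 \<union> symdiff x ` U0"
      proof
        fix u assume u: "u \<in> U"
        show "u \<in> U0 \<union> symdiff x ` U0"
        proof (cases "a \<in> u")
          case True
          have "symdiff x u \<in> U0" unfolding U0_def using sgD(2)[OF insert.prems(1) x(1) u] x(2) True
            unfolding symdiff_def by auto
          then show ?thesis by (intro UnI2 image_eqI[of _ _ "symdiff x u"]) auto
        next
          case False then show ?thesis using u by (simp add: U0_def)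
        qed
      qed
      show "U0 \<union> symdiff x ` U0 \<subseteq> U"
        using sgD(2)[OF insert.prems(1) x(1)] unfolding U0_def by blast
    qed
    have disj: "U0 \<inter> symdiff x ` U0 = {}" unfolding U0_def using x(2) unfolding symdiff_def by blast
    have inj: "inj_on (symdiff x) U0" by (intro inj_onI) (simp add: symdiff_inj)
    have "card U = card U0 + card (symdiff x ` U0)"
      by (subst U, rule card_Un_disjoint) (use finU0 disj in auto)
    also have "\<dots> = 2 ^ Suc n" using card_image[OF inj] n by simp
    finally show ?thesis by blast
  qed
qed

lemma dimZ2_eq: "card U = 2 ^ n \<Longrightarrow> dimZ2 U = n"
  unfolding dimZ2_def by (rule the_equality) (auto simp: power_inject_exp)

lemma sg_card_pow2:
  assumes "sg U" "U \<subseteq> Pow X" "finite X" shows "card U = 2 ^ dimZ2 U"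
proof -
  obtain n where "card U = 2 ^ n" using sg_card_pow2_aux assms by blast
  then show ?thesis using dimZ2_eq by metis
qed

lemma dimZ2_mono:
  assumes "sg U" "sg W" "U \<subseteq> W" "W \<subseteq> Pow X" "finite X"
  shows "dimZ2 U \<le> dimZ2 W"
proof -
  have "finite W" using assms(4,5) finite_subset by blast
  then have "card U \<le> card W" using assms(3) card_mono by blast
  moreover have "card U = 2 ^ dimZ2 U" using sg_card_pow2[OF assms(1) _ assms(5)] assms(3,4) by blast
  moreover have "card W = 2 ^ dimZ2 W" using sg_card_pow2[OF assms(2,4,5)] .
  ultimately have "(2::nat) ^ dimZ2 U \<le> 2 ^ dimZ2 W" by simp
  then show ?thesis by (simp add: power_le_imp_le_exp)
qed

lemma card_ssum_Int:
  assumes "sg U" "sg W" "finite U" "finite W"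
  shows "card (ssum U W) * card (U \<inter> W) = card U * card W"
proof -
  define fib where "fib s = {p\<in>U \<times> W. symdiff (fst p) (snd p) = s}" for s
  have cov: "\<Union>(fib ` ssum U W) = U \<times> W"
    unfolding fib_def ssum_def by force
  have cardfib: "card (fib s) = card (U \<inter> W)" if s: "s \<in> ssum U W" for s
  proof -
    obtain u0 w0 where uw: "u0 \<in> U" "w0 \<in> W" "s = symdiff u0 w0" using s unfolding ssum_def by blast
    have "bij_betw (\<lambda>i. (symdiff u0 i, symdiff w0 i)) (U \<inter> W) (fib s)"
    proof (rule bij_betw_byWitness[where f' = "\<lambda>p. symdiff u0 (fst p)"])
      show "\<forall>a\<in>U \<inter> W. symdiff u0 (fst (symdiff u0 a, symdiff w0 a)) = a" by simp
      show "\<forall>a'\<in>fib s. (symdiff u0 (symdiff u0 (fst a')), symdiff w0 (symdiff u0 (fst a'))) = a'"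
      proof
        fix p assume "p \<in> fib s"
        then have "symdiff (fst p) (snd p) = symdiff u0 w0" unfolding fib_def uw by auto
        then have "symdiff w0 (symdiff u0 (fst p)) = snd p" unfolding symdiff_def by blast
        then show "(symdiff u0 (symdiff u0 (fst p)), symdiff w0 (symdiff u0 (fst p))) = p" by (simp add: prod_eq_iff)
      qed
      show "(\<lambda>i. (symdiff u0 i, symdiff w0 i)) ` (U \<inter> W) \<subseteq> fib s"
      proof
        fix q assume "q \<in> (\<lambda>i. (symdiff u0 i, symdiff w0 i)) ` (U \<inter> W)"
        then obtain i where i: "i \<in> U" "i \<in> W" "q = (symdiff u0 i, symdiff w0 i)" by blast
        have "symdiff (symdiff u0 i) (symdiff w0 i) = s" unfolding uw symdiff_def by blast
        then show "q \<in> fib s" unfolding fib_def using i uw sgD(2)[OF assms(1)] sgD(2)[OF assms(2)] by auto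
      qed
      show "(\<lambda>p. symdiff u0 (fst p)) ` fib s \<subseteq> U \<inter> W"
      proof
        fix i assume "i \<in> (\<lambda>p. symdiff u0 (fst p)) ` fib s"
        then obtain p where p: "p \<in> fib s" "i = symdiff u0 (fst p)" by blast
        then have pp: "fst p \<in> U" "snd p \<in> W" "symdiff (fst p) (snd p) = symdiff u0 w0" unfolding fib_def uw by auto
        then have "i = symdiff w0 (snd p)" unfolding p(2) symdiff_def by blast
        moreover have "i \<in> U" using p(2) pp uw sgD(2)[OF assms(1)] by simp
        ultimately show "i \<in> U \<inter> W" using pp uw sgD(2)[OF assms(2)] by simp
      qed
    qed
    then show ?thesis by (metis bij_betw_same_card)
  qed
  have finS: "finite (ssum U W)"
  proof -
    have "ssum U W = (\<lambda>p. symdiff (fst p) (snd p)) ` (U \<times> W)" unfolding ssum_def by force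
    then show ?thesis using assms(3,4) by simp
  qed
  have injf: "inj_on fib (ssum U W)"
  proof (rule inj_onI)
    fix s s' assume s: "s \<in> ssum U W" "s' \<in> ssum U W" "fib s = fib s'"
    then obtain u0 w0 where uw: "u0 \<in> U" "w0 \<in> W" "s = symdiff u0 w0" unfolding ssum_def by blast
    then have "(u0,w0) \<in> fib s" unfolding fib_def by auto
    then have "(u0,w0) \<in> fib s'" using s(3) by simp
    then show "s = s'" unfolding fib_def uw by auto
  qed
  have "card (U \<inter> W) * card (fib ` ssum U W) = card (\<Union>(fib ` ssum U W))"
  proof (rule card_partition)
    show "finite (fib ` ssum U W)" using finS by simp
    show "finite (\<Union> (fib ` ssum U W))" unfolding cov using assms(3,4) by simp
    show "\<And>c. c \<in> fib ` ssum U W \<Longrightarrow> card c = card (U \<inter> W)" using cardfib by blast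
    show "\<And>c1 c2. c1 \<in> fib ` ssum U W \<Longrightarrow> c2 \<in> fib ` ssum U W \<Longrightarrow> c1 \<noteq> c2 \<Longrightarrow> c1 \<inter> c2 = {}"
      unfolding fib_def by auto
  qed
  then show ?thesis unfolding cov card_cartesian_product card_image[OF injf] by (simp add: mult.commute)
qed

lemma dim_ssum_Int:
  assumes "sg U" "sg W" "U \<subseteq> Pow X" "W \<subseteq> Pow X" "finite X"
  shows "dimZ2 (ssum U W) + dimZ2 (U \<inter> W) = dimZ2 U + dimZ2 W"
proof -
  have f: "finite U" "finite W" using assms finite_subset by (metis finite_Pow_iff)+
  have "card (ssum U W) * card (U \<inter> W) = card U * card W" by (rule card_ssum_Int) (use assms f in auto)
  moreover have "card (U \<inter> W) = 2 ^ dimZ2 (U \<inter> W)"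
    using sg_card_pow2[OF sg_Int[OF assms(1,2)] _ assms(5)] assms(3) by blast
  ultimately have "(2::nat) ^ dimZ2 (ssum U W) * 2 ^ dimZ2 (U \<inter> W) = 2 ^ dimZ2 U * 2 ^ dimZ2 W"
    using sg_card_pow2[OF sg_ssum[OF assms(1,2)] ssum_Pow[OF assms(3,4)] assms(5)]
      sg_card_pow2[OF assms(1,3,5)] sg_card_pow2[OF assms(2,4,5)] by simp
  then show ?thesis by (simp add: power_add[symmetric] power_inject_exp)
qed

definition coset :: "'b set set \<Rightarrow> 'b set \<Rightarrow> 'b set set" where
  "coset B c = symdiff c ` B"

lemma card_cosets:
  assumes "sg B" "sg V" "B \<subseteq> V" "finite V" "A \<subseteq> V"
  shows "card (coset B ` A) * card B = card (ssum A B)"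
proof -
  have finB: "finite B" using assms finite_subset by blast
  have cU: "\<Union>(coset B ` A) = ssum A B" unfolding coset_def ssum_def by blast
  have fin: "finite (ssum A B)" using ssum_le[OF assms(2) assms(5) assms(3)] assms(4) finite_subset by blast
  have "card B * card (coset B ` A) = card (\<Union>(coset B ` A))"
  proof (rule card_partition)
    show "finite (\<Union>(coset B ` A))" using cU fin by simp
    then show "finite (coset B ` A)" by (rule finite_UnionD)
    show "\<And>c. c \<in> coset B ` A \<Longrightarrow> card c = card B"
      unfolding coset_def by (auto intro!: card_image inj_onI simp: symdiff_inj)
    show "\<And>c1 c2. c1 \<in> coset B ` A \<Longrightarrow> c2 \<in> coset B ` A \<Longrightarrow> c1 \<noteq> c2 \<Longrightarrow> c1 \<inter> c2 = {}"
    proof -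
      fix c1 c2 assume "c1 \<in> coset B ` A" "c2 \<in> coset B ` A" "c1 \<noteq> c2"
      then obtain a1 a2 where a: "c1 = coset B a1" "c2 = coset B a2" by blast
      show "c1 \<inter> c2 = {}"
      proof (rule ccontr)
        assume "c1 \<inter> c2 \<noteq> {}"
        then obtain b1 b2 where b: "b1 \<in> B" "b2 \<in> B" "symdiff a1 b1 = symdiff a2 b2"
          unfolding a coset_def by auto
        then have a2: "a2 = symdiff a1 (symdiff b1 b2)" unfolding symdiff_def by blast
        have "coset B a2 = coset B a1"
        proof -
          have "coset B a2 = symdiff a1 ` (symdiff (symdiff b1 b2) ` B)"
            unfolding coset_def a2 image_image by (simp add: symdiff_assoc)
          also have "symdiff (symdiff b1 b2) ` B = B"
          proof
            show "symdiff (symdiff b1 b2) ` B \<subseteq> B" using sgD(2)[OF assms(1)] b by auto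
            show "B \<subseteq> symdiff (symdiff b1 b2) ` B"
            proof
              fix x assume "x \<in> B"
              then show "x \<in> symdiff (symdiff b1 b2) ` B"
                using sgD(2)[OF assms(1)] sgD(2)[OF assms(1) b(1,2)] by (intro image_eqI[of _ _ "symdiff (symdiff b1 b2) x"]) auto
            qed
          qed
          finally show ?thesis unfolding coset_def by simp
        qed
        then show False using \<open>c1 \<noteq> c2\<close> a by simp
      qed
    qed
  qed
  then show ?thesis using cU by (simp add: mult.commute)
qed

definition Zg :: "'a set set \<Rightarrow> 'a set set set" where
  "Zg E = {c. c \<subseteq> E \<and> (\<forall>v. even (card {e\<in>c. v \<in> e}))}"

lemma cycles_Zg: "cycles K = Zg (edges K)"
  unfolding cycles_def Zg_def by simp

lemma card_split: "finite X \<Longrightarrow> card X = card (X - Y) + card (X \<inter> Y)"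
proof -
  assume f: "finite X"
  have "X = (X - Y) \<union> (X \<inter> Y)" by blast
  then have "card X = card ((X - Y) \<union> (X \<inter> Y))" by simp
  also have "\<dots> = card (X - Y) + card (X \<inter> Y)" by (rule card_Un_disjoint) (use f in auto)
  finally show ?thesis .
qed

lemma card_filter_sum: "finite c \<Longrightarrow> card {x\<in>c. P x} = (\<Sum>x\<in>c. if P x then 1 else 0)"
  using sum.inter_filter[of c "\<lambda>_. 1::nat" P] by simp

lemma card_symdiff_filter:
  assumes "finite c" "finite d"
  shows "card {e\<in>symdiff c d. P e} + 2 * card {e\<in>c \<inter> d. P e} = card {e\<in>c. P e} + card {e\<in>d. P e}"
proof -
  have f: "finite {e\<in>c. P e}" "finite {e\<in>d. P e}" using assms by auto
  have 1: "{e\<in>symdiff c d. P e} = ({e\<in>c. P e} - {e\<in>d. P e}) \<union> ({e\<in>d. P e} - {e\<in>c. P e})"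
    unfolding symdiff_def by blast
  have 2: "{e\<in>c \<inter> d. P e} = {e\<in>c. P e} \<inter> {e\<in>d. P e}" by blast
  have "card {e\<in>symdiff c d. P e} = card ({e\<in>c. P e} - {e\<in>d. P e}) + card ({e\<in>d. P e} - {e\<in>c. P e})"
    unfolding 1 by (rule card_Un_disjoint) (use f in auto)
  moreover have "card {e\<in>c. P e} = card ({e\<in>c. P e} - {e\<in>d. P e}) + card ({e\<in>c. P e} \<inter> {e\<in>d. P e})"
    by (rule card_split) (use f in auto)
  moreover have "card {e\<in>d. P e} = card ({e\<in>d. P e} - {e\<in>c. P e}) + card ({e\<in>c. P e} \<inter> {e\<in>d. P e})"
    using card_split[of "{e\<in>d. P e}" "{e\<in>c. P e}"] f by (simp add: Int_commute)
  ultimately show ?thesis unfolding 2 by simp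
qed

lemma even_symdiff_filter:
  assumes "finite c" "finite d" "even (card {e\<in>c. P e})" "even (card {e\<in>d. P e})"
  shows "even (card {e\<in>symdiff c d. P e})"
  using card_symdiff_filter[OF assms(1,2), of P] assms(3,4) by presburger

lemma odd_symdiff_filter:
  assumes "finite c" "finite d"
  shows "odd (card {e\<in>symdiff c d. P e}) \<longleftrightarrow> odd (card {e\<in>c. P e}) \<noteq> odd (card {e\<in>d. P e})"
  using card_symdiff_filter[OF assms(1,2), of P] by presburger

lemma sg_Zg: assumes "finite E" shows "sg (Zg E)"
  unfolding sg_def
proof (intro conjI ballI)
  show "{} \<in> Zg E" unfolding Zg_def by simp
  fix x y assume xy: "x \<in> Zg E" "y \<in> Zg E"
  then have fin: "finite x" "finite y" unfolding Zg_def using assms finite_subset by blast+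
  show "symdiff x y \<in> Zg E" using xy even_symdiff_filter[OF fin] unfolding Zg_def
    by (auto simp: symdiff_def)
qed

lemma Zg_mono: "E \<subseteq> F \<Longrightarrow> Zg E \<subseteq> Zg F"
  unfolding Zg_def by auto

lemma Zg_Pow: "Zg E \<subseteq> Pow E"
  unfolding Zg_def by auto

lemma conn_refl[simp]: "conn E x x"
  unfolding conn_def by simp

lemma conn_edge: "{x, y} \<in> E \<Longrightarrow> conn E x y"
  unfolding conn_def by auto

lemma conn_trans: "conn E x y \<Longrightarrow> conn E y z \<Longrightarrow> conn E x z"
  unfolding conn_def by (rule rtranclp_trans)

lemma conn_sym: "conn E x y \<Longrightarrow> conn E y x"
  unfolding conn_def
proof (induction rule: rtranclp_induct)
  case base then show ?case by simp
next
  case (step y z)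
  have "(\<lambda>x y. {x, y} \<in> E) z y" using step(2) by (simp add: insert_commute)
  then show ?case using step(3) by (rule converse_rtranclp_into_rtranclp)
qed

lemma conn_mono: assumes "E \<subseteq> F" "conn E x y" shows "conn F x y"
  using assms(2) unfolding conn_def
  by (induction rule: rtranclp_induct) (use assms(1) in \<open>auto intro: rtranclp.rtrancl_into_rtrancl\<close>)

lemma conn_mono2: assumes "\<And>a b. {a,b} \<in> E \<Longrightarrow> conn F a b" "conn E x y" shows "conn F x y"
  using assms(2) unfolding conn_def
proof (induction rule: rtranclp_induct)
  case base then show ?case by simp
next
  case (step y z)
  have "conn F y z" using assms(1)[OF step(2)] .
  then show ?case using step(3) unfolding conn_def by (meson rtranclp_trans)
qed

lemma conn_induct[consumes 1, case_names base step]: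
  assumes "conn E x y" "P x" "\<And>y z. conn E x y \<Longrightarrow> {y, z} \<in> E \<Longrightarrow> P y \<Longrightarrow> P z"
  shows "P y"
  using assms(1) unfolding conn_def
  by (induction rule: rtranclp_induct) (use assms(2,3) in \<open>auto simp: conn_def\<close>)

lemma conn_insert:
  "conn (insert {u, v} E) x y \<longleftrightarrow>
     conn E x y \<or> (conn E x u \<and> conn E v y) \<or> (conn E x v \<and> conn E u y)"
proof
  assume "conn (insert {u, v} E) x y"
  then show "conn E x y \<or> (conn E x u \<and> conn E v y) \<or> (conn E x v \<and> conn E u y)"
  proof (induction rule: conn_induct)
    case base then show ?case by simp
  next
    case (step y z)
    show ?case
    proof (cases "{y, z} \<in> E")
      case True
      then have yz: "conn E y z" by (rule conn_edge)
      have t: "conn E a z" if "conn E a y" for a using conn_trans[OF that yz] .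
      show ?thesis using step(3) t by blast
    next
      case False
      then have "{y, z} = {u, v}" using step(2) by simp
      then have "(y = u \<and> z = v) \<or> (y = v \<and> z = u)" by (simp add: doubleton_eq_iff)
      then show ?thesis
      proof
        assume "y = u \<and> z = v" then show ?thesis using step(3) by auto
      next
        assume "y = v \<and> z = u" then show ?thesis using step(3) by auto
      qed
    qed
  qed
next
  have E: "conn E a b \<Longrightarrow> conn (insert {u, v} E) a b" for a b by (rule conn_mono[of E]) auto
  have uv: "conn (insert {u, v} E) u v" "conn (insert {u, v} E) v u"
    by (auto intro: conn_edge simp: insert_commute)
  assume "conn E x y \<or> (conn E x u \<and> conn E v y) \<or> (conn E x v \<and> conn E u y)"
  then show "conn (insert {u, v} E) x y"
  proof (elim disjE conjE)
    assume "conn E x y" then show ?thesis by (rule E)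
  next
    assume a: "conn E x u" "conn E v y"
    show ?thesis using conn_trans[OF conn_trans[OF E[OF a(1)] uv(1)] E[OF a(2)]] .
  next
    assume a: "conn E x v" "conn E u y"
    show ?thesis using conn_trans[OF conn_trans[OF E[OF a(1)] uv(2)] E[OF a(2)]] .
  qed
qed

lemma walk_lemma:
  assumes "finite E" "\<forall>e\<in>E. card e = 2" "conn E u v"
  shows "\<exists>P\<subseteq>E. \<forall>w. odd (card {e\<in>P. w \<in> e}) \<longleftrightarrow> (u \<noteq> v \<and> (w = u \<or> w = v))"
  using assms(3)
proof (induction rule: conn_induct)
  case base
  show ?case by (intro exI[of _ "{}"]) simp
next
  case (step y z)
  then obtain P where P: "P \<subseteq> E" "\<forall>w. odd (card {e\<in>P. w \<in> e}) \<longleftrightarrow> (u \<noteq> y \<and> (w = u \<or> w = y))"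
    by blast
  have yz: "y \<noteq> z" using assms(2) step(2) by fastforce
  have finP: "finite P" using P(1) assms(1) finite_subset by blast
  define P' where "P' = symdiff P {{y, z}}"
  have "P' \<subseteq> E" unfolding P'_def symdiff_def using P(1) step(2) by blast
  moreover have "odd (card {e\<in>P'. w \<in> e}) \<longleftrightarrow> (u \<noteq> z \<and> (w = u \<or> w = z))" for w
  proof -
    have "odd (card {e\<in>P'. w \<in> e}) \<longleftrightarrow> odd (card {e\<in>P. w \<in> e}) \<noteq> odd (card {e\<in>{{y,z}}. w \<in> e})"
      unfolding P'_def by (rule odd_symdiff_filter) (use finP in auto)
    also have "{e\<in>{{y,z}}. w \<in> e} = (if w = y \<or> w = z then {{y,z}} else {})" by auto
    then have "card {e\<in>{{y,z}}. w \<in> e} = (if w = y \<or> w = z then 1 else 0)" by simp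
    finally show ?thesis using P(2) yz by auto
  qed
  ultimately show ?case by blast
qed

lemma sum_card_double:
  assumes "finite A" "finite c"
  shows "(\<Sum>w\<in>A. card {x\<in>c. w \<in> x}) = (\<Sum>x\<in>c. card (x \<inter> A))"
proof -
  have "(\<Sum>w\<in>A. card {x\<in>c. w \<in> x}) = (\<Sum>w\<in>A. \<Sum>x\<in>c. if w \<in> x then 1 else 0)"
    using assms card_filter_sum[OF assms(2)] by simp
  also have "\<dots> = (\<Sum>x\<in>c. \<Sum>w\<in>A. if w \<in> x then 1 else 0)" by (rule sum.swap)
  also have "\<dots> = (\<Sum>x\<in>c. card (x \<inter> A))"
  proof (rule sum.cong[OF refl])
    fix x show "(\<Sum>w\<in>A. if w \<in> x then 1 else 0) = card (x \<inter> A)"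
      using card_filter_sum[OF assms(1), of "\<lambda>w. w \<in> x"] by (simp add: Int_def conj_commute)
  qed
  finally show ?thesis .
qed

lemma cycle_edge_conn:
  assumes "finite E" "\<forall>e\<in>E. card e = 2" "c \<in> Zg E" "{u, v} \<in> c"
  shows "conn (E - {{u, v}}) u v"
proof (rule ccontr)
  assume nc: "\<not> conn (E - {{u, v}}) u v"
  define e where "e = {u, v}"
  have uv: "u \<noteq> v" using nc by auto
  have cE: "c \<subseteq> E" "\<And>w. even (card {x\<in>c. w \<in> x})" using assms(3) unfolding Zg_def by auto
  have finc: "finite c" using cE(1) assms(1) finite_subset by blast
  define A where "A = {w\<in>\<Union>c. conn (E - {e}) u w}"
  have "finite (\<Union>c)"
  proof (rule finite_Union[OF finc])
    fix x assume "x \<in> c" then have "card x = 2" using cE(1) assms(2) by auto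
    then show "finite x" by (metis card.infinite zero_neq_numeral)
  qed
  then have finA: "finite A" unfolding A_def by (rule rev_finite_subset) blast
  have "even (\<Sum>w\<in>A. card {x\<in>c. w \<in> x})" using cE(2) by (intro dvd_sum) auto
  then have ev: "even (\<Sum>x\<in>c. card (x \<inter> A))" using sum_card_double[OF finA finc] by simp
  have "(\<Sum>x\<in>c. card (x \<inter> A)) = card (e \<inter> A) + (\<Sum>x\<in>c - {e}. card (x \<inter> A))"
    using assms(4) finc unfolding e_def by (simp add: sum.remove)
  moreover have "e \<inter> A = {u}"
  proof -
    have "u \<in> A" unfolding A_def using assms(4) by (simp add: conn_refl) blast
    moreover have "v \<notin> A" unfolding A_def using nc e_def by blast
    ultimately show ?thesis unfolding e_def by blast
  qed
  moreover have "even (\<Sum>x\<in>c - {e}. card (x \<inter> A))"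
  proof (rule dvd_sum)
    fix x assume x: "x \<in> c - {e}"
    then have "card x = 2" using cE(1) assms(2) by auto
    then obtain p q where pq: "x = {p, q}" "p \<noteq> q" by (meson card_2_iff)
    have xE: "x \<in> E - {e}" using x cE(1) by auto
    have "p \<in> A \<longleftrightarrow> q \<in> A"
    proof -
      have "conn (E - {e}) p q" using xE pq by (simp add: conn_edge)
      moreover have "conn (E - {e}) q p" using xE pq by (simp add: conn_edge insert_commute)
      moreover have "p \<in> \<Union>c" "q \<in> \<Union>c" using x pq by auto
      ultimately show ?thesis unfolding A_def using conn_trans[of "E - {e}" u p q] conn_trans[of "E - {e}" u q p] by blast
    qed
    then have "x \<inter> A = {} \<or> x \<inter> A = x" using pq by auto
    then show "even (card (x \<inter> A))" using \<open>card x = 2\<close> by auto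
  qed
  ultimately show False using ev by simp
qed

lemma comp_eq: assumes "conn E u v" shows "comp C E u = comp C E v"
proof -
  have "conn E u y \<longleftrightarrow> conn E v y" for y
    using conn_trans[OF assms, of y] conn_trans[OF conn_sym[OF assms], of y] by blast
  then show ?thesis unfolding comp_def by simp
qed

lemma conn_empty: "conn {} x y \<longleftrightarrow> x = y"
proof
  assume "conn {} x y" then show "x = y" by (induction rule: conn_induct) auto
qed simp

lemma card_comps_empty: "card (comps C {}) = card C"
proof -
  have "comps C {} = (\<lambda>u. {u}) ` C"
    unfolding comps_def comp_def conn_empty by auto
  moreover have "inj_on (\<lambda>u. {u}) C" by (auto intro: inj_onI)
  ultimately show ?thesis by (simp add: card_image)
qed

lemma conn_insert_same:
  assumes "conn E u v" shows "conn (insert {u, v} E) = conn E"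
proof (intro ext iffI)
  fix x y assume "conn (insert {u, v} E) x y"
  then have "conn E x y \<or> (conn E x u \<and> conn E v y) \<or> (conn E x v \<and> conn E u y)" by (simp add: conn_insert)
  then show "conn E x y"
  proof (elim disjE conjE)
    assume a: "conn E x u" "conn E v y" show ?thesis using conn_trans[OF conn_trans[OF a(1) assms] a(2)] .
  next
    assume a: "conn E x v" "conn E u y" show ?thesis using conn_trans[OF conn_trans[OF a(1) conn_sym[OF assms]] a(2)] .
  qed
next
  fix x y assume "conn E x y" then show "conn (insert {u, v} E) x y" by (simp add: conn_insert)
qed

lemma card_comps_merge:
  assumes C: "finite C" and uv: "u \<in> C" "v \<in> C" and nc: "\<not> conn E u v"
  shows "card (comps C (insert {u, v} E)) + 1 = card (comps C E)"
proof -
  define U where "U = comp C E u"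
  define V where "V = comp C E v"
  have cU: "comp C (insert {u, v} E) x = U \<union> V" if "conn E u x" for x
  proof -
    have nxv: "\<not> conn E x v" using that nc conn_trans[OF that, of v] by blast
    have "conn E x y \<longleftrightarrow> conn E u y" for y using conn_trans[OF that, of y] conn_trans[OF conn_sym[OF that], of y] by blast
    then have "conn (insert {u, v} E) x y \<longleftrightarrow> conn E u y \<or> conn E v y" for y
      using nxv conn_sym[OF that] by (simp only: conn_insert) blast
    then show ?thesis unfolding U_def V_def comp_def by blast
  qed
  have cV: "comp C (insert {u, v} E) x = U \<union> V" if "conn E v x" for x
  proof -
    have nxu: "\<not> conn E x u" using that nc conn_sym[OF conn_trans[OF that, of u]] by blast
    have "conn E x y \<longleftrightarrow> conn E v y" for y using conn_trans[OF that, of y] conn_trans[OF conn_sym[OF that], of y] by blast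
    then have "conn (insert {u, v} E) x y \<longleftrightarrow> conn E u y \<or> conn E v y" for y
      using nxu conn_sym[OF that] by (simp only: conn_insert) blast
    then show ?thesis unfolding U_def V_def comp_def by blast
  qed
  have cO: "comp C (insert {u, v} E) x = comp C E x" if "\<not> conn E u x" "\<not> conn E v x" for x
  proof -
    have "\<not> conn E x u" "\<not> conn E x v" using that conn_sym[of E x u] conn_sym[of E x v] by blast+
    then have "conn (insert {u, v} E) x y \<longleftrightarrow> conn E x y" for y by (simp only: conn_insert) blast
    then show ?thesis unfolding comp_def by blast
  qed
  have eq: "comps C (insert {u, v} E) = insert (U \<union> V) (comps C E - {U, V})"
  proof
    show "comps C (insert {u, v} E) \<subseteq> insert (U \<union> V) (comps C E - {U, V})"
    proof
      fix X assume "X \<in> comps C (insert {u, v} E)"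
      then obtain x where x: "x \<in> C" "X = comp C (insert {u, v} E) x" unfolding comps_def by blast
      show "X \<in> insert (U \<union> V) (comps C E - {U, V})"
      proof (cases "conn E u x \<or> conn E v x")
        case True then show ?thesis using cU cV x by blast
      next
        case False
        then have "X = comp C E x" using cO x by blast
        moreover have "comp C E x \<noteq> U" "comp C E x \<noteq> V"
        proof -
          have "x \<in> comp C E x" using x unfolding comp_def by simp
          then show "comp C E x \<noteq> U" "comp C E x \<noteq> V" using False unfolding U_def V_def comp_def by blast+
        qed
        ultimately show ?thesis using x(1) unfolding comps_def by blast
      qed
    qed
  next
    show "insert (U \<union> V) (comps C E - {U, V}) \<subseteq> comps C (insert {u, v} E)"
    proof
      fix X assume X: "X \<in> insert (U \<union> V) (comps C E - {U, V})"
      show "X \<in> comps C (insert {u, v} E)"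
      proof (cases "X = U \<union> V")
        case True then show ?thesis using cU[of u] uv unfolding comps_def by auto
      next
        case False
        then obtain x where x: "x \<in> C" "X = comp C E x" "X \<noteq> U" "X \<noteq> V" using X unfolding comps_def by blast
        have "\<not> conn E u x" using comp_eq[of E u x C] x unfolding U_def by blast
        moreover have "\<not> conn E v x" using comp_eq[of E v x C] x unfolding V_def by blast
        ultimately have "X = comp C (insert {u, v} E) x" using cO x by blast
        then show ?thesis using x(1) unfolding comps_def by blast
      qed
    qed
  qed
  have UV: "U \<in> comps C E" "V \<in> comps C E" "U \<noteq> V"
  proof -
    show "U \<in> comps C E" "V \<in> comps C E" unfolding U_def V_def comps_def using uv by auto
    have "v \<in> V" unfolding V_def comp_def using uv by simp
    moreover have "v \<notin> U" unfolding U_def comp_def using nc by simp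
    ultimately show "U \<noteq> V" by blast
  qed
  have notin: "U \<union> V \<notin> comps C E - {U, V}"
  proof
    assume "U \<union> V \<in> comps C E - {U, V}"
    then obtain x where x: "x \<in> C" "U \<union> V = comp C E x" "U \<union> V \<noteq> U" unfolding comps_def by blast
    have "u \<in> U" unfolding U_def comp_def using uv by simp
    then have "conn E x u" using x unfolding comp_def by auto
    then have "comp C E x = U" unfolding U_def by (rule comp_eq)
    then show False using x by simp
  qed
  have fin: "finite (comps C E)" unfolding comps_def using C by simp
  have "card (comps C (insert {u, v} E)) = card (comps C E - {U, V}) + 1"
    unfolding eq using notin fin by simp
  also have "card (comps C E - {U, V}) = card (comps C E) - 2"
    using UV fin by (simp add: card_Diff_subset)
  also have "card (comps C E) \<ge> 2"
  proof -
    have "{U, V} \<subseteq> comps C E" using UV by simp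
    then have "card {U, V} \<le> card (comps C E)" using fin card_mono by blast
    then show ?thesis using UV by simp
  qed
  ultimately show ?thesis by simp
qed

lemma Zg_insert_noconn:
  assumes "finite E" "\<forall>x\<in>E. card x = 2" "card {u, v} = 2" "{u, v} \<notin> E" "\<not> conn E u v"
  shows "Zg (insert {u, v} E) = Zg E"
proof
  show "Zg E \<subseteq> Zg (insert {u, v} E)" by (rule Zg_mono) auto
  show "Zg (insert {u, v} E) \<subseteq> Zg E"
  proof
    fix c assume c: "c \<in> Zg (insert {u, v} E)"
    have "{u, v} \<notin> c"
    proof
      assume "{u, v} \<in> c"
      moreover have "finite (insert {u, v} E)" "\<forall>x\<in>insert {u, v} E. card x = 2" using assms by auto
      ultimately have "conn (insert {u, v} E - {{u, v}}) u v"
        using cycle_edge_conn[OF _ _ c] by blast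
      moreover have "insert {u, v} E - {{u, v}} = E" using assms(4) by auto
      ultimately show False using assms(5) by simp
    qed
    then show "c \<in> Zg E" using c unfolding Zg_def by auto
  qed
qed

lemma Zg_insert_conn:
  assumes "finite E" "\<forall>x\<in>E. card x = 2" "card {u, v} = 2" "{u, v} \<notin> E" "conn E u v"
  shows "card (Zg (insert {u, v} E)) = 2 * card (Zg E)"
proof -
  define e where "e = {u, v}"
  obtain P where P: "P \<subseteq> E" "\<forall>w. odd (card {x\<in>P. w \<in> x}) \<longleftrightarrow> (u \<noteq> v \<and> (w = u \<or> w = v))"
    using walk_lemma[OF assms(1,2,5)] by blast
  have uv: "u \<noteq> v" using assms(3) by auto
  have finP: "finite P" using P(1) assms(1) finite_subset by blast
  have eP: "e \<notin> P" using P(1) assms(4) e_def by blast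
  define c0 where "c0 = insert e P"
  have c0: "c0 \<in> Zg (insert e E)"
    unfolding Zg_def
  proof (intro CollectI conjI allI)
    show "c0 \<subseteq> insert e E" unfolding c0_def using P(1) by blast
    fix w
    have "c0 = symdiff P {e}" unfolding c0_def symdiff_def using eP by blast
    then have "odd (card {x\<in>c0. w \<in> x}) \<longleftrightarrow> odd (card {x\<in>P. w \<in> x}) \<noteq> odd (card {x\<in>{e}. w \<in> x})"
      using odd_symdiff_filter[OF finP, of "{e}"] by simp
    moreover have "{x\<in>{e}. w \<in> x} = (if w = u \<or> w = v then {e} else {})" unfolding e_def by auto
    ultimately show "even (card {x\<in>c0. w \<in> x})" using P(2) uv by (auto split: if_splits)
  qed
  have finE': "finite (insert e E)" using assms(1) by simp
  have sgE': "sg (Zg (insert e E))" by (rule sg_Zg[OF finE'])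
  have eq: "Zg (insert e E) = Zg E \<union> symdiff c0 ` Zg E"
  proof
    show "Zg (insert e E) \<subseteq> Zg E \<union> symdiff c0 ` Zg E"
    proof
      fix c assume c: "c \<in> Zg (insert e E)"
      show "c \<in> Zg E \<union> symdiff c0 ` Zg E"
      proof (cases "e \<in> c")
        case False then show ?thesis using c unfolding Zg_def by auto
      next
        case True
        have d: "symdiff c0 c \<in> Zg (insert e E)" using sgD(2)[OF sgE' c0 c] .
        have "e \<notin> symdiff c0 c" unfolding symdiff_def c0_def using True by blast
        then have "symdiff c0 c \<in> Zg E" using d unfolding Zg_def by auto
        then show ?thesis by (intro UnI2 image_eqI[of _ _ "symdiff c0 c"]) auto
      qed
    qed
    show "Zg E \<union> symdiff c0 ` Zg E \<subseteq> Zg (insert e E)"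
      using Zg_mono[of E "insert e E"] sgD(2)[OF sgE' c0] by blast
  qed
  have disj: "Zg E \<inter> symdiff c0 ` Zg E = {}"
  proof -
    have "e \<notin> c" if "c \<in> Zg E" for c using that assms(4) unfolding Zg_def e_def by auto
    moreover have "e \<in> symdiff c0 c" if "c \<in> Zg E" for c
      using that assms(4) unfolding Zg_def e_def c0_def symdiff_def by auto
    ultimately show ?thesis by blast
  qed
  have finZ: "finite (Zg E)" using Zg_Pow[of E] assms(1) finite_subset by blast
  have inj: "inj_on (symdiff c0) (Zg E)" by (intro inj_onI) (simp add: symdiff_inj)
  have "card (Zg (insert e E)) = card (Zg E) + card (symdiff c0 ` Zg E)"
    unfolding eq by (rule card_Un_disjoint) (use finZ disj in auto)
  then show ?thesis using card_image[OF inj] unfolding e_def by simp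
qed

lemma graph_onD: "graph_on C E \<Longrightarrow> e \<in> E \<Longrightarrow> \<exists>u v. e = {u, v} \<and> u \<noteq> v \<and> u \<in> C \<and> v \<in> C"
  unfolding graph_on_def by (metis card_2_iff insert_subset)

lemma cycle_rank:
  assumes "finite C" "graph_on C E"
  shows "2 ^ card E * 2 ^ card (comps C E) = card (Zg E) * (2::nat) ^ card C"
proof -
  have "finite E" using assms unfolding graph_on_def by (metis Pow_iff finite_Pow_iff rev_finite_subset subsetI)
  then show ?thesis using assms(2)
  proof (induction E rule: finite_induct)
    case empty
    have "Zg ({}::'a set set) = {{}}" unfolding Zg_def by auto
    then have c1: "card (Zg ({}::'a set set)) = 1" by simp
    show ?case by (simp add: card_comps_empty c1)
  next
    case (insert e E)
    have gE: "graph_on C E" using insert(4) unfolding graph_on_def by auto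
    note IH = insert(3)[OF gE]
    obtain u v where e: "e = {u, v}" "u \<noteq> v" "u \<in> C" "v \<in> C" using graph_onD[OF insert(4)] by blast
    have c2: "\<forall>x\<in>E. card x = 2" using gE unfolding graph_on_def by auto
    have ce: "card {u, v} = 2" using e by simp
    show ?case
    proof (cases "conn E u v")
      case True
      have "comps C (insert e E) = comps C E"
        unfolding e comps_def comp_def conn_insert_same[OF True] ..
      moreover have "card (Zg (insert e E)) = 2 * card (Zg E)"
        unfolding e by (rule Zg_insert_conn) (use insert(1,2) c2 ce True e in auto)
      ultimately show ?thesis using IH insert(1,2) by simp
    next
      case False
      have "card (comps C (insert e E)) + 1 = card (comps C E)"
        unfolding e by (rule card_comps_merge) (use assms(1) e False in auto)
      moreover have "Zg (insert e E) = Zg E"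
        unfolding e by (rule Zg_insert_noconn) (use insert(1,2) c2 ce False e in auto)
      ultimately have h: "Suc (card (comps C (insert e E))) = card (comps C E)" "Zg (insert e E) = Zg E" by simp_all
      have "card (insert e E) + card (comps C (insert e E)) = card E + card (comps C E)"
        using h(1) insert(1,2) by simp
      then have "(2::nat) ^ card (insert e E) * 2 ^ card (comps C (insert e E)) = 2 ^ card E * 2 ^ card (comps C E)"
        by (simp add: power_add[symmetric])
      then show ?thesis using IH h(2) by simp
    qed
  qed
qed

lemma comps_image:
  assumes "\<And>a b. {a, b} \<in> E1 \<Longrightarrow> conn E2 a b"
  shows "comps C E2 = (\<lambda>X. comp C E2 (SOME v. v \<in> X)) ` comps C E1"
proof -
  have "comp C E2 (SOME v. v \<in> comp C E1 u) = comp C E2 u" if u: "u \<in> C" for u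
  proof -
    have "u \<in> comp C E1 u" using u unfolding comp_def by simp
    then have "(SOME v. v \<in> comp C E1 u) \<in> comp C E1 u" by (rule someI)
    then have "conn E1 u (SOME v. v \<in> comp C E1 u)" unfolding comp_def by simp
    then have "conn E2 u (SOME v. v \<in> comp C E1 u)" using conn_mono2[of E1 E2] assms by blast
    then show ?thesis by (rule comp_eq[symmetric])
  qed
  then show ?thesis unfolding comps_def image_image by simp
qed

lemma comps_card_mono:
  assumes "finite C" "\<And>a b. {a, b} \<in> E1 \<Longrightarrow> conn E2 a b"
  shows "card (comps C E2) \<le> card (comps C E1)"
  unfolding comps_image[of E1 E2 C, OF assms(2), simplified] by (rule card_image_le) (use assms(1) in \<open>simp add: comps_def\<close>)

lemma comps_eq:
  assumes "\<And>a b. {a, b} \<in> E1 \<Longrightarrow> conn E2 a b" "\<And>a b. {a, b} \<in> E2 \<Longrightarrow> conn E1 a b"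
  shows "comps C E1 = comps C E2"
proof -
  have "conn E1 = conn E2"
    using conn_mono2[of E1 E2] conn_mono2[of E2 E1] assms by (intro ext iffI) blast+
  then show ?thesis unfolding comps_def comp_def by simp
qed

lemma connected_card_comps:
  assumes "connected_graph C E" "u \<in> C"
  shows "card (comps C E) = 1"
proof -
  have "comps C E = {C}"
    using assms unfolding connected_graph_def comps_def comp_def by auto
  then show ?thesis by simp
qed

lemma card_comps_connected:
  assumes "card (comps C E) = 1"
  shows "connected_graph C E"
  unfolding connected_graph_def
proof (intro ballI)
  fix u v assume uv: "u \<in> C" "v \<in> C"
  obtain X where X: "comps C E = {X}" using assms card_1_singletonE by blast
  have "comp C E u = X" "comp C E v = X" using X uv unfolding comps_def by blast+
  moreover have "v \<in> comp C E v" using uv unfolding comp_def by simp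
  ultimately have "v \<in> comp C E u" by simp
  then show "conn E u v" unfolding comp_def by simp
qed

lemma graph_on_finite: "finite C \<Longrightarrow> graph_on C E \<Longrightarrow> finite E"
  unfolding graph_on_def by (metis Pow_iff finite_Pow_iff rev_finite_subset subsetI)

lemma graph_on_card2: "graph_on C E \<Longrightarrow> \<forall>x\<in>E. card x = 2"
  unfolding graph_on_def by auto

lemma tree_Zg:
  assumes "finite C" "is_tree C T"
  shows "Zg T = {{}}"
proof -
  have g: "graph_on C T" using assms(2) unfolding is_tree_def by simp
  have fin: "finite T" using graph_on_finite[OF assms(1) g] .
  have "c = {}" if c: "c \<in> Zg T" for c
  proof (rule ccontr)
    assume "c \<noteq> {}"
    then obtain e where e: "e \<in> c" by blast
    then have eT: "e \<in> T" using c unfolding Zg_def by auto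
    then obtain u v where uv: "e = {u, v}" using graph_onD[OF g] by blast
    have "conn (T - {e}) u v"
      using cycle_edge_conn[OF fin graph_on_card2[OF g] c] e uv by simp
    then show False using assms(2) eT uv unfolding is_tree_def by blast
  qed
  moreover have "{} \<in> Zg T" unfolding Zg_def by simp
  ultimately show ?thesis by blast
qed

lemma acyclic_is_tree:
  assumes "finite C" "graph_on C T" "connected_graph C T" "Zg T = {{}}"
  shows "is_tree C T"
  unfolding is_tree_def
proof (intro conjI assms(2,3) ballI allI impI notI)
  fix e u v assume e: "e \<in> T" "e = {u, v}" and cn: "conn (T - {e}) u v"
  have fin: "finite (T - {e})" using graph_on_finite[OF assms(1,2)] by simp
  have c2: "\<forall>x\<in>T - {e}. card x = 2" using graph_on_card2[OF assms(2)] by auto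
  have ce: "card {u, v} = 2" using graph_on_card2[OF assms(2)] e by auto
  have "card (Zg (insert {u, v} (T - {e}))) = 2 * card (Zg (T - {e}))"
    by (rule Zg_insert_conn[OF fin c2 ce]) (use e cn in auto)
  moreover have "insert {u, v} (T - {e}) = T" using e by auto
  moreover have "card (Zg (T - {e})) \<ge> 1"
  proof -
    have "{} \<in> Zg (T - {e})" unfolding Zg_def by simp
    moreover have "finite (Zg (T - {e}))" using Zg_Pow[of "T - {e}"] fin finite_subset by blast
    ultimately show ?thesis by (metis card_0_eq empty_iff less_one not_le)
  qed
  ultimately show False using assms(4) by simp
qed

lemma filt_facts:
  assumes "filtration C S ent"
  shows "finite C" "\<And>\<sigma>. \<sigma> \<in> S \<Longrightarrow> \<sigma> \<subseteq> C" "finite S" "connected_graph C (edges S)"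
    "\<And>\<sigma>. \<sigma> \<in> S \<Longrightarrow> 0 \<le> ent \<sigma>"
proof -
  show fC: "finite C" using assms unfolding filtration_def by simp
  show sub: "\<And>\<sigma>. \<sigma> \<in> S \<Longrightarrow> \<sigma> \<subseteq> C" using assms unfolding filtration_def by simp
  have "S \<subseteq> Pow C" using sub by blast
  then show "finite S" using fC finite_subset by blast
  show "connected_graph C (edges S)" using assms unfolding filtration_def by simp
  show "\<And>\<sigma>. \<sigma> \<in> S \<Longrightarrow> 0 \<le> ent \<sigma>" using assms unfolding filtration_def by simp
qed

lemma graph_on_edges:
  assumes "filtration C S ent" "K \<subseteq> S" shows "graph_on C (edges K)"
  using filt_facts(2)[OF assms(1)] assms(2) unfolding graph_on_def edges_def by blast

lemma card_Zg_1: "Zg E = {{}} \<Longrightarrow> card (Zg E) = 1" by simp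

lemma pow2_inj: "(2::nat) ^ m = 2 ^ n \<Longrightarrow> m = n" by simp

lemma tree_card:
  assumes "finite C" "is_tree C T" "u \<in> C"
  shows "card T + 1 = card C"
proof -
  have g: "graph_on C T" using assms(2) unfolding is_tree_def by simp
  have "connected_graph C T" using assms(2) unfolding is_tree_def by simp
  then have "card (comps C T) = 1" by (rule connected_card_comps[OF _ assms(3)])
  moreover have "card (Zg T) = 1" using tree_Zg[OF assms(1,2)] by simp
  ultimately have "(2::nat) ^ (card T + 1) = 2 ^ card C" using cycle_rank[OF assms(1) g] by (simp add: power_add)
  then show ?thesis by (rule pow2_inj)
qed

lemma mst_exchange:
  assumes filt: "filtration C S ent" and mst: "is_MST C S ent T"
    and f: "{a, b} \<in> edges (Qle S ent s)"
  shows "conn {e\<in>T. ent e \<le> s} a b"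
proof (rule ccontr)
  define Ts where "Ts = {e\<in>T. ent e \<le> s}"
  assume nc: "\<not> conn {e\<in>T. ent e \<le> s} a b"
  then have nc: "\<not> conn Ts a b" unfolding Ts_def .
  have fC: "finite C" using filt_facts[OF filt] by simp
  have tree: "is_tree C T" and TS: "T \<subseteq> edges S" using mst unfolding is_MST_def by auto
  have gT: "graph_on C T" using tree unfolding is_tree_def by simp
  have finT: "finite T" using graph_on_finite[OF fC gT] .
  have fS: "{a, b} \<in> S" "ent {a, b} \<le> s" "card {a, b} = 2" using f unfolding edges_def Qle_def by auto
  have abC: "a \<in> C" "b \<in> C" using filt_facts(2)[OF filt fS(1)] by auto
  have ab: "a \<noteq> b" using fS(3) by auto
  define f where "f = {a, b}"
  have fT: "f \<notin> T"
  proof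
    assume "f \<in> T" then have "f \<in> Ts" unfolding Ts_def f_def using fS by simp
    then have "conn Ts a b" unfolding f_def by (rule conn_edge)
    then show False using nc by simp
  qed
  have conT: "conn T a b" using tree abC unfolding is_tree_def connected_graph_def by blast
  have ZT: "Zg T = {{}}" using tree_Zg[OF fC tree] .
  have "card (Zg (insert f T)) = 2 * card (Zg T)"
    unfolding f_def by (rule Zg_insert_conn[OF finT graph_on_card2[OF gT] fS(3)]) (use fT conT f_def in auto)
  then have c2: "card (Zg (insert f T)) = 2" using ZT by simp
  have e0: "{} \<in> Zg (insert f T)" unfolding Zg_def by simp
  obtain c where c: "Zg (insert f T) = {{}, c}" "c \<noteq> {}"
  proof -
    from c2 obtain x y where xy: "Zg (insert f T) = {x, y}" "x \<noteq> y" by (meson card_2_iff)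
    show ?thesis
    proof (cases "x = {}")
      case True then show ?thesis using that xy by blast
    next
      case False
      then have "y = {}" using e0 xy by blast
      then show ?thesis using that[of x] xy False by (simp add: insert_commute)
    qed
  qed
  have cZ: "c \<in> Zg (insert f T)" using c by simp
  have fc: "f \<in> c"
  proof (rule ccontr)
    assume "f \<notin> c"
    then have "c \<in> Zg T" using cZ unfolding Zg_def by auto
    then show False using ZT c(2) by simp
  qed
  obtain e where e: "e \<in> c" "e \<notin> insert f Ts"
  proof (rule ccontr)
    assume "\<not> thesis"
    then have sub: "c \<subseteq> insert f Ts" using that by blast
    then have "c \<in> Zg (insert f Ts)" using cZ unfolding Zg_def by auto
    moreover have "finite (insert f Ts)" using finT unfolding Ts_def by simp
    moreover have "\<forall>x\<in>insert f Ts. card x = 2"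
      using graph_on_card2[OF gT] fS(3) unfolding Ts_def f_def by auto
    ultimately have "conn (insert f Ts - {f}) a b"
      using cycle_edge_conn[of "insert f Ts" c a b] fc unfolding f_def by blast
    moreover have "insert f Ts - {f} = Ts" using fT unfolding Ts_def by auto
    ultimately show False using nc by simp
  qed
  have "c \<subseteq> insert f T" using cZ unfolding Zg_def by simp
  then have "e \<in> insert f T" using e(1) by blast
  then have eT: "e \<in> T" "ent e > s" using e(2) unfolding Ts_def by auto
  define T' where "T' = insert f (T - {e})"
  have ZT': "Zg T' = {{}}"
  proof -
    have "Zg T' \<subseteq> Zg (insert f T)" unfolding T'_def by (rule Zg_mono) auto
    moreover have "c \<notin> Zg T'" using e(1) unfolding T'_def Zg_def using eT fT by auto
    moreover have "{} \<in> Zg T'" unfolding Zg_def by simp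
    ultimately show ?thesis using c(1) by blast
  qed
  have gT': "graph_on C T'" using gT fS(3) abC unfolding T'_def f_def graph_on_def by auto
  have "card T > 0" using finT eT(1) card_gt_0_iff by blast
  then have cT': "card T' = card T" unfolding T'_def using fT eT finT by (simp add: card.insert_remove)
  have "(2::nat) ^ card T' * 2 ^ card (comps C T') = 1 * 2 ^ card C"
    using cycle_rank[OF fC gT'] ZT' by simp
  moreover have "card T + 1 = card C" using tree_card[OF fC tree abC(1)] .
  ultimately have "(2::nat) ^ (card T + card (comps C T')) = 2 ^ (card T + 1)"
    using cT' by (simp add: power_add)
  then have "card T + card (comps C T') = card T + 1" by (rule pow2_inj)
  then have "card (comps C T') = 1" by simp
  then have conn': "connected_graph C T'" by (rule card_comps_connected)
  have tree': "is_tree C T'" by (rule acyclic_is_tree[OF fC gT' conn' ZT'])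
  have "T' \<subseteq> edges S" using TS fS unfolding T'_def f_def edges_def by auto
  then have le: "total_len ent T \<le> total_len ent T'" using mst tree' unfolding is_MST_def by blast
  have "total_len ent T' = elen ent f + (total_len ent T - elen ent e)"
    unfolding T'_def total_len_def using fT eT finT by (simp add: sum_diff1)
  moreover have "elen ent f < elen ent e" unfolding elen_def f_def using fS(2) eT(2) by simp
  ultimately show False using le by simp
qed

lemma mst_count:
  assumes filt: "filtration C S ent" and mst: "is_MST C S ent T"
  shows "card {e\<in>T. ent e \<le> s} + card (comps C (edges (Qle S ent s))) = card C"
proof -
  define Ts where "Ts = {e\<in>T. ent e \<le> s}"
  have fC: "finite C" using filt_facts[OF filt] by simp
  have tree: "is_tree C T" and TS: "T \<subseteq> edges S" using mst unfolding is_MST_def by auto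
  have gT: "graph_on C T" using tree unfolding is_tree_def by simp
  have gTs: "graph_on C Ts" using gT unfolding Ts_def graph_on_def by auto
  have "Zg Ts \<subseteq> Zg T" unfolding Ts_def by (rule Zg_mono) auto
  moreover have "{} \<in> Zg Ts" unfolding Zg_def by simp
  ultimately have "Zg Ts = {{}}" using tree_Zg[OF fC tree] by blast
  then have "(2::nat) ^ (card Ts + card (comps C Ts)) = 2 ^ card C"
    using cycle_rank[OF fC gTs] by (simp add: power_add)
  then have "card Ts + card (comps C Ts) = card C" by (simp add: power_inject_exp)
  moreover have "comps C Ts = comps C (edges (Qle S ent s))"
  proof (rule comps_eq)
    fix x y assume "{x, y} \<in> Ts"
    then have "{x, y} \<in> edges (Qle S ent s)" using TS unfolding Ts_def edges_def Qle_def by auto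
    then show "conn (edges (Qle S ent s)) x y" by (rule conn_edge)
  next
    fix x y assume "{x, y} \<in> edges (Qle S ent s)"
    then show "conn Ts x y" unfolding Ts_def by (rule mst_exchange[OF filt mst])
  qed
  ultimately show ?thesis unfolding Ts_def by simp
qed

lemma mem_symdiff: "x \<in> symdiff A B \<longleftrightarrow> (x \<in> A) \<noteq> (x \<in> B)"
  unfolding symdiff_def by blast

lemma bd2_empty[simp]: "bd2 {} = {}"
  unfolding bd2_def by simp

lemma bd2_symdiff:
  assumes "finite T1" "finite T2"
  shows "bd2 (symdiff T1 T2) = symdiff (bd2 T1) (bd2 T2)"
proof -
  have "odd (card {t\<in>symdiff T1 T2. e \<subseteq> t}) \<longleftrightarrow> odd (card {t\<in>T1. e \<subseteq> t}) \<noteq> odd (card {t\<in>T2. e \<subseteq> t})" for e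
    by (rule odd_symdiff_filter[OF assms])
  note h = this
  show ?thesis
  proof (rule set_eqI)
    fix e
    show "e \<in> bd2 (symdiff T1 T2) \<longleftrightarrow> e \<in> symdiff (bd2 T1) (bd2 T2)"
      unfolding mem_symdiff unfolding bd2_def mem_Collect_eq h[of e] by blast
  qed
qed

definition BB :: "'a set set \<Rightarrow> 'a set set set" where
  "BB K = boundaries K \<inter> cycles K"

lemma finite_triangles: "finite K \<Longrightarrow> finite (triangles K)"
  unfolding triangles_def by simp

lemma sg_boundaries: assumes "finite K" shows "sg (boundaries K)"
  unfolding sg_def boundaries_def
proof (intro conjI ballI)
  show "{} \<in> bd2 ` Pow (triangles K)" by (rule image_eqI[of _ _ "{}"]) auto
  fix x y assume "x \<in> bd2 ` Pow (triangles K)" "y \<in> bd2 ` Pow (triangles K)"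
  then obtain T1 T2 where T: "T1 \<subseteq> triangles K" "T2 \<subseteq> triangles K" "x = bd2 T1" "y = bd2 T2" by blast
  have f: "finite T1" "finite T2" using rev_finite_subset[OF finite_triangles[OF assms]] T(1,2) by blast+
  have "symdiff x y = bd2 (symdiff T1 T2)" using bd2_symdiff[OF f] T by simp
  moreover have "symdiff T1 T2 \<subseteq> triangles K" using T unfolding symdiff_def by blast
  ultimately show "symdiff x y \<in> bd2 ` Pow (triangles K)" by blast
qed

lemma sg_cycles: "finite K \<Longrightarrow> sg (cycles K)"
  unfolding cycles_Zg by (rule sg_Zg) (simp add: edges_def)

lemma sg_BB: "finite K \<Longrightarrow> sg (BB K)"
  unfolding BB_def by (intro sg_Int sg_boundaries sg_cycles)

lemma cycles_mono: "K \<subseteq> L \<Longrightarrow> cycles K \<subseteq> cycles L"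
  unfolding cycles_Zg by (rule Zg_mono) (auto simp: edges_def)

lemma boundaries_mono: "K \<subseteq> L \<Longrightarrow> boundaries K \<subseteq> boundaries L"
  unfolding boundaries_def triangles_def by auto

lemma BB_mono: "K \<subseteq> L \<Longrightarrow> BB K \<subseteq> BB L"
  unfolding BB_def using cycles_mono boundaries_mono by blast

lemma cycles_Pow: "K \<subseteq> S \<Longrightarrow> cycles K \<subseteq> Pow (edges S)"
  unfolding cycles_def edges_def by auto

lemma BB_Pow: "K \<subseteq> S \<Longrightarrow> BB K \<subseteq> Pow (edges S)"
  unfolding BB_def using cycles_Pow by blast

lemma BB_cycles: "BB K \<subseteq> cycles K"
  unfolding BB_def by blast

lemma coset_shift:
  assumes "sg B" "b \<in> B" shows "coset B (symdiff c b) = coset B c"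
proof -
  have "symdiff b ` B = B"
  proof
    show "symdiff b ` B \<subseteq> B" using sgD(2)[OF assms(1) assms(2)] by blast
    show "B \<subseteq> symdiff b ` B"
    proof
      fix x assume "x \<in> B"
      then show "x \<in> symdiff b ` B" using sgD(2)[OF assms(1) assms(2)] by (intro image_eqI[of _ _ "symdiff b x"]) auto
    qed
  qed
  then have "coset B (symdiff c b) = symdiff c ` (symdiff b ` B)"
    unfolding coset_def image_image by (simp add: symdiff_assoc)
  then show ?thesis using \<open>symdiff b ` B = B\<close> unfolding coset_def by simp
qed

lemma hclass_coset:
  assumes "finite K" "c \<in> cycles K"
  shows "hclass K c = coset (BB K) c"
proof
  have sZ: "sg (cycles K)" using sg_cycles[OF assms(1)] .
  show "hclass K c \<subseteq> coset (BB K) c"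
  proof
    fix c' assume "c' \<in> hclass K c"
    then have c': "c' \<in> cycles K" "symdiff c c' \<in> boundaries K" unfolding hclass_def by auto
    have "symdiff c c' \<in> cycles K" using sgD(2)[OF sZ assms(2) c'(1)] .
    then have "symdiff c c' \<in> BB K" using c' unfolding BB_def by simp
    then show "c' \<in> coset (BB K) c" unfolding coset_def by (intro image_eqI[of _ _ "symdiff c c'"]) auto
  qed
  show "coset (BB K) c \<subseteq> hclass K c"
  proof
    fix c' assume "c' \<in> coset (BB K) c"
    then obtain b where b: "b \<in> BB K" "c' = symdiff c b" unfolding coset_def by blast
    have "c' \<in> cycles K" using b sgD(2)[OF sZ assms(2)] unfolding BB_def by auto
    then show "c' \<in> hclass K c" unfolding hclass_def using b unfolding BB_def by auto
  qed
qed

lemma H1_coset: assumes "finite K" shows "H1 K = coset (BB K) ` cycles K"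
  unfolding H1_def by (rule image_cong[OF refl hclass_coset[OF assms]])

lemma induced_hclass:
  assumes "K \<subseteq> L" "finite L" "c \<in> cycles K"
  shows "induced K L (hclass K c) = coset (BB L) c"
proof -
  have fK: "finite K" using rev_finite_subset[OF assms(2) assms(1)] .
  have "c \<in> hclass K c" using assms(3) unfolding hclass_def using sgD(1)[OF sg_boundaries[OF fK]] by simp
  then have z: "(SOME z. z \<in> hclass K c) \<in> hclass K c" by (rule someI)
  define z where "z = (SOME z. z \<in> hclass K c)"
  have zK: "z \<in> cycles K" "symdiff c z \<in> boundaries K" using z unfolding z_def hclass_def by auto
  have cL: "c \<in> cycles L" "z \<in> cycles L" using cycles_mono[OF assms(1)] assms(3) zK by auto
  have "symdiff c z \<in> cycles L" using sgD(2)[OF sg_cycles[OF assms(2)] cL] .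
  moreover have "symdiff c z \<in> boundaries L" using zK boundaries_mono[OF assms(1)] by blast
  ultimately have bz: "symdiff c z \<in> BB L" unfolding BB_def by simp
  have "induced K L (hclass K c) = coset (BB L) z"
    unfolding induced_def z_def[symmetric] using hclass_coset[OF assms(2) cL(2)] .
  also have "z = symdiff c (symdiff c z)" by simp
  also have "coset (BB L) (symdiff c (symdiff c z)) = coset (BB L) c"
    by (rule coset_shift[OF sg_BB[OF assms(2)] bz])
  finally show ?thesis .
qed

lemma induced_image:
  assumes "K \<subseteq> L" "finite L"
  shows "induced K L ` H1 K = coset (BB L) ` cycles K"
proof -
  have "H1 K = hclass K ` cycles K" unfolding H1_def ..
  then have "induced K L ` H1 K = (\<lambda>c. induced K L (hclass K c)) ` cycles K" by auto
  also have "\<dots> = coset (BB L) ` cycles K" using induced_hclass[OF assms] by simp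
  finally show ?thesis .
qed

definition rk :: "'a set set \<Rightarrow> 'a set set \<Rightarrow> nat" where
  "rk K L = dimZ2 (ssum (cycles K) (BB L)) - dimZ2 (BB L)"

lemma hrank_eq:
  assumes "K \<subseteq> L" "L \<subseteq> S" "finite S"
  shows "hrank K L = rk K L" "dimZ2 (BB L) \<le> dimZ2 (ssum (cycles K) (BB L))"
    "card (induced K L ` H1 K) = 2 ^ rk K L"
proof -
  have fL: "finite L" using rev_finite_subset[OF assms(3) assms(2)] .
  have fE: "finite (edges S)" using assms(3) unfolding edges_def by simp
  have KS: "K \<subseteq> S" using assms by blast
  have sZ: "sg (cycles K)" using sg_cycles[OF rev_finite_subset[OF fL assms(1)]] .
  have sB: "sg (BB L)" using sg_BB[OF fL] .
  have sZL: "sg (cycles L)" using sg_cycles[OF fL] .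
  have pZ: "cycles K \<subseteq> Pow (edges S)" using cycles_Pow[OF KS] .
  have pB: "BB L \<subseteq> Pow (edges S)" using BB_Pow[OF assms(2)] .
  have le: "BB L \<subseteq> ssum (cycles K) (BB L)" by (rule ssum_sub2[OF sgD(1)[OF sZ]])
  show dle: "dimZ2 (BB L) \<le> dimZ2 (ssum (cycles K) (BB L))"
    by (rule dimZ2_mono[OF sB sg_ssum[OF sZ sB] le ssum_Pow[OF pZ pB] fE])
  have "card (coset (BB L) ` cycles K) * card (BB L) = card (ssum (cycles K) (BB L))"
  proof (rule card_cosets[OF sB sZL BB_cycles])
    show "finite (cycles L)" using rev_finite_subset[OF _ cycles_Pow[OF assms(2)]] fE by blast
    show "cycles K \<subseteq> cycles L" by (rule cycles_mono[OF assms(1)])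
  qed
  then have "card (induced K L ` H1 K) * 2 ^ dimZ2 (BB L) = 2 ^ dimZ2 (ssum (cycles K) (BB L))"
    unfolding induced_image[OF assms(1) fL]
    using sg_card_pow2[OF sB pB fE] sg_card_pow2[OF sg_ssum[OF sZ sB] ssum_Pow[OF pZ pB] fE] by simp
  also have "(2::nat) ^ dimZ2 (ssum (cycles K) (BB L)) = 2 ^ rk K L * 2 ^ dimZ2 (BB L)"
    unfolding rk_def using dle by (simp add: power_add[symmetric])
  finally show c: "card (induced K L ` H1 K) = 2 ^ rk K L" by simp
  then show "hrank K L = rk K L" unfolding hrank_def by (rule dimZ2_eq)
qed

lemma rank_mono1:
  assumes "K1 \<subseteq> K2" "K2 \<subseteq> L" "L \<subseteq> S" "finite S"
  shows "hrank K1 L \<le> hrank K2 L"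
proof -
  have fL: "finite L" using rev_finite_subset[OF assms(4) assms(3)] .
  have fE: "finite (edges S)" using assms(4) unfolding edges_def by simp
  have fK: "finite K1" "finite K2" using rev_finite_subset[OF fL] assms(1,2) by (meson order_trans)+
  have sZ1: "sg (cycles K1)" "sg (cycles K2)" using sg_cycles[OF fK(1)] sg_cycles[OF fK(2)] .
  have sB: "sg (BB L)" using sg_BB[OF fL] .
  have KS: "K2 \<subseteq> S" using assms(2,3) by (rule order_trans)
  have p: "cycles K2 \<subseteq> Pow (edges S)" "BB L \<subseteq> Pow (edges S)" using cycles_Pow[OF KS] BB_Pow[OF assms(3)] .
  have "dimZ2 (ssum (cycles K1) (BB L)) \<le> dimZ2 (ssum (cycles K2) (BB L))"
    by (rule dimZ2_mono[OF sg_ssum[OF sZ1(1) sB] sg_ssum[OF sZ1(2) sB] ssum_mono[OF cycles_mono[OF assms(1)] order_refl] ssum_Pow[OF p] fE])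
  then show ?thesis using hrank_eq(1)[of K1 L S] hrank_eq(1)[of K2 L S] assms unfolding rk_def by auto
qed

lemma rank_diff:
  assumes "K1 \<subseteq> K2" "K2 \<subseteq> L" "L \<subseteq> S" "finite S"
  shows "int (hrank K2 L) - int (hrank K1 L) =
     int (dimZ2 (cycles K2)) - int (dimZ2 (ssum (cycles K1) (cycles K2 \<inter> BB L)))"
proof -
  have fL: "finite L" using rev_finite_subset[OF assms(4) assms(3)] .
  have fE: "finite (edges S)" using assms(4) unfolding edges_def by simp
  have fK: "finite K1" "finite K2" using rev_finite_subset[OF fL] assms(1,2) by (meson order_trans)+
  have sZ: "sg (cycles K1)" "sg (cycles K2)" using sg_cycles[OF fK(1)] sg_cycles[OF fK(2)] .
  have sB: "sg (BB L)" using sg_BB[OF fL] .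
  have KS: "K2 \<subseteq> S" "K1 \<subseteq> S" using assms(1,2,3) by auto
  have p: "cycles K1 \<subseteq> Pow (edges S)" "cycles K2 \<subseteq> Pow (edges S)" "BB L \<subseteq> Pow (edges S)"
    using cycles_Pow[OF KS(2)] cycles_Pow[OF KS(1)] BB_Pow[OF assms(3)] .
  have p2: "cycles K2 \<inter> BB L \<subseteq> Pow (edges S)" using p(2) by blast
  have d1: "dimZ2 (ssum (cycles K2) (BB L)) + dimZ2 (cycles K2 \<inter> BB L) = dimZ2 (cycles K2) + dimZ2 (BB L)"
    by (rule dim_ssum_Int[OF sZ(2) sB p(2,3) fE])
  have d2: "dimZ2 (ssum (cycles K1) (BB L)) + dimZ2 (cycles K1 \<inter> BB L) = dimZ2 (cycles K1) + dimZ2 (BB L)"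
    by (rule dim_ssum_Int[OF sZ(1) sB p(1,3) fE])
  have d3: "dimZ2 (ssum (cycles K1) (cycles K2 \<inter> BB L)) + dimZ2 (cycles K1 \<inter> (cycles K2 \<inter> BB L)) = dimZ2 (cycles K1) + dimZ2 (cycles K2 \<inter> BB L)"
    by (rule dim_ssum_Int[OF sZ(1) sg_Int[OF sZ(2) sB] p(1) p2 fE])
  have "cycles K1 \<inter> (cycles K2 \<inter> BB L) = cycles K1 \<inter> BB L" using cycles_mono[OF assms(1)] by blast
  then show ?thesis
    using hrank_eq(1,2)[of K1 L S] hrank_eq(1,2)[of K2 L S] assms d1 d2 d3 unfolding rk_def by auto
qed

lemma rank_4term:
  assumes "K1 \<subseteq> K2" "K2 \<subseteq> L1" "L1 \<subseteq> L2" "L2 \<subseteq> S" "finite S"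
  shows "int (hrank K2 L2) - int (hrank K1 L2) \<le> int (hrank K2 L1) - int (hrank K1 L1)"
proof -
  have fL: "finite L2" using rev_finite_subset[OF assms(5) assms(4)] .
  have fE: "finite (edges S)" using assms(5) unfolding edges_def by simp
  have fK: "finite K1" "finite K2" "finite L1" using rev_finite_subset[OF fL] assms(1,2,3) by (meson order_trans)+
  have sZ: "sg (cycles K1)" "sg (cycles K2)" using sg_cycles[OF fK(1)] sg_cycles[OF fK(2)] .
  have sB: "sg (BB L1)" "sg (BB L2)" using sg_BB[OF fK(3)] sg_BB[OF fL] .
  have KS: "K1 \<subseteq> S" using assms(1-4) by auto
  have p: "cycles K1 \<subseteq> Pow (edges S)" "BB L2 \<subseteq> Pow (edges S)"
    using cycles_Pow[OF KS] BB_Pow[OF assms(4)] .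
  have "dimZ2 (ssum (cycles K1) (cycles K2 \<inter> BB L1)) \<le> dimZ2 (ssum (cycles K1) (cycles K2 \<inter> BB L2))"
  proof (rule dimZ2_mono[OF sg_ssum[OF sZ(1) sg_Int[OF sZ(2) sB(1)]] sg_ssum[OF sZ(1) sg_Int[OF sZ(2) sB(2)]] _ _ fE])
    show "ssum (cycles K1) (cycles K2 \<inter> BB L1) \<subseteq> ssum (cycles K1) (cycles K2 \<inter> BB L2)"
      using BB_mono[OF assms(3)] by (intro ssum_mono) auto
    show "ssum (cycles K1) (cycles K2 \<inter> BB L2) \<subseteq> Pow (edges S)" using p by (intro ssum_Pow) blast+
  qed
  moreover have "int (hrank K2 L1) - int (hrank K1 L1) = int (dimZ2 (cycles K2)) - int (dimZ2 (ssum (cycles K1) (cycles K2 \<inter> BB L1)))"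
    by (rule rank_diff) (use assms in auto)
  moreover have "int (hrank K2 L2) - int (hrank K1 L2) = int (dimZ2 (cycles K2)) - int (dimZ2 (ssum (cycles K1) (cycles K2 \<inter> BB L2)))"
    by (rule rank_diff) (use assms in auto)
  ultimately show ?thesis by simp
qed

lemma telescope:
  fixes \<phi> :: "'a set set \<Rightarrow> int"
  assumes fS: "finite S"
  shows "t \<le> a \<Longrightarrow> (\<Sum>b\<in>{b\<in>ent ` S. t < b \<and> b \<le> a}. \<phi> (Qle S ent b) - \<phi> (Qlt S ent b))
           = \<phi> (Qle S ent a) - \<phi> (Qle S ent t)"
proof (induction "card {b\<in>ent ` S. t < b \<and> b \<le> a}" arbitrary: t rule: less_induct)
  case less
  define W where "W = {b\<in>ent ` S. t < b \<and> b \<le> a}"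
  have fW: "finite W" unfolding W_def using fS by simp
  show ?case
  proof (cases "W = {}")
    case True
    have "Qle S ent a = Qle S ent t"
    proof -
      have "ent \<sigma> \<le> t" if "\<sigma> \<in> S" "ent \<sigma> \<le> a" for \<sigma>
        using True that unfolding W_def by force
      then show ?thesis unfolding Qle_def using less.prems by force
    qed
    moreover have e: "{b\<in>ent ` S. t < b \<and> b \<le> a} = {}" using True unfolding W_def .
    ultimately show ?thesis by (simp only: e sum.empty)
  next
    case False
    define b0 where "b0 = Min W"
    have b0W: "b0 \<in> W" unfolding b0_def using fW False by simp
    have b0min: "\<And>b. b \<in> W \<Longrightarrow> b0 \<le> b" unfolding b0_def using fW by simp
    have b0: "t < b0" "b0 \<le> a" "b0 \<in> ent ` S" using b0W unfolding W_def by auto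
    have Qlt: "Qlt S ent b0 = Qle S ent t"
    proof -
      have "ent \<sigma> \<le> t" if "\<sigma> \<in> S" "ent \<sigma> < b0" for \<sigma>
      proof (rule ccontr)
        assume "\<not> ent \<sigma> \<le> t"
        then have "ent \<sigma> \<in> W" unfolding W_def using that b0 by auto
        then show False using b0min that by force
      qed
      then show ?thesis unfolding Qlt_def Qle_def using b0 by force
    qed
    have W': "W - {b0} = {b\<in>ent ` S. b0 < b \<and> b \<le> a}"
      unfolding W_def using b0min b0 unfolding W_def by force
    have "card (W - {b0}) < card W" using fW b0W by (rule card_Diff1_less)
    then have IH: "(\<Sum>b\<in>W - {b0}. \<phi> (Qle S ent b) - \<phi> (Qlt S ent b)) = \<phi> (Qle S ent a) - \<phi> (Qle S ent b0)"
      unfolding W' using less.hyps[of b0] b0(2) unfolding W_def by simp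
    have "(\<Sum>b\<in>W. \<phi> (Qle S ent b) - \<phi> (Qlt S ent b)) =
        (\<phi> (Qle S ent b0) - \<phi> (Qlt S ent b0)) + (\<Sum>b\<in>W - {b0}. \<phi> (Qle S ent b) - \<phi> (Qlt S ent b))"
      using fW b0W by (simp add: sum.remove)
    then show ?thesis using IH Qlt unfolding W_def by simp
  qed
qed

lemma Qle_mono: "a \<le> b \<Longrightarrow> Qle S ent a \<subseteq> Qle S ent b"
  unfolding Qle_def by auto
lemma Qlt_Qle: "a \<le> b \<Longrightarrow> Qlt S ent a \<subseteq> Qle S ent b"
  unfolding Qle_def Qlt_def by auto
lemma Qle_Qlt: "a < b \<Longrightarrow> Qle S ent a \<subseteq> Qlt S ent b"
  unfolding Qle_def Qlt_def by auto
lemma Qle_sub: "Qle S ent a \<subseteq> S" unfolding Qle_def by auto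
lemma Qlt_sub: "Qlt S ent a \<subseteq> S" unfolding Qlt_def by auto

definition hh :: "'a set set \<Rightarrow> ('a set \<Rightarrow> real) \<Rightarrow> real \<Rightarrow> 'a set set \<Rightarrow> int" where
  "hh S ent b L = int (hrank (Qle S ent b) L) - int (hrank (Qlt S ent b) L)"

lemma mult_fin_eq:
  assumes "finite S" "b < d"
  shows "int (mult_fin S ent b d) = hh S ent b (Qlt S ent d) - hh S ent b (Qle S ent d)"
proof -
  have "int (hrank (Qle S ent b) (Qle S ent d)) - int (hrank (Qlt S ent b) (Qle S ent d))
        \<le> int (hrank (Qle S ent b) (Qlt S ent d)) - int (hrank (Qlt S ent b) (Qlt S ent d))"
    by (rule rank_4term[OF Qlt_Qle[OF order_refl] Qle_Qlt[OF assms(2)] Qlt_Qle[OF order_refl] Qle_sub assms(1)])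
  then show ?thesis unfolding mult_fin_def hh_def by simp
qed

lemma mult_inf_eq:
  assumes "finite S"
  shows "int (mult_inf S ent b) = hh S ent b S"
proof -
  have "hrank (Qlt S ent b) S \<le> hrank (Qle S ent b) S"
    by (rule rank_mono1[OF Qlt_Qle[OF order_refl] Qle_sub order_refl assms])
  then show ?thesis unfolding mult_inf_def hh_def by simp
qed

lemma deaths_sum:
  assumes fS: "finite S" and ba: "b \<le> a"
  shows "(\<Sum>d\<in>{d\<in>ent ` S. a < d}. int (mult_fin S ent b d)) + int (mult_inf S ent b) = hh S ent b (Qle S ent a)"
proof -
  define M where "M = Max (insert a (ent ` S))"
  have fV: "finite (ent ` S)" using fS by simp
  have aM: "a \<le> M" unfolding M_def using fV by simp
  have QM: "Qle S ent M = S" unfolding Qle_def M_def using fV by auto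
  have set: "{d\<in>ent ` S. a < d} = {d\<in>ent ` S. a < d \<and> d \<le> M}" unfolding M_def using fV by auto
  have "(\<Sum>d\<in>{d\<in>ent ` S. a < d}. int (mult_fin S ent b d))
      = (\<Sum>d\<in>{d\<in>ent ` S. a < d}. hh S ent b (Qlt S ent d) - hh S ent b (Qle S ent d))"
    using mult_fin_eq[OF fS] ba by (intro sum.cong) auto
  also have "\<dots> = - (\<Sum>d\<in>{d\<in>ent ` S. a < d \<and> d \<le> M}. hh S ent b (Qle S ent d) - hh S ent b (Qlt S ent d))"
    unfolding set by (simp add: sum_negf[symmetric])
  also have "\<dots> = - (hh S ent b (Qle S ent M) - hh S ent b (Qle S ent a))"
    using telescope[OF fS aM, of "hh S ent b"] by simp
  finally show ?thesis using mult_inf_eq[OF fS] QM by simp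
qed

lemma size_filter_sum:
  "size (filter_mset Q (\<Sum>x\<in>A. f x)) = (\<Sum>x\<in>A. size (filter_mset Q (f x)))"
  by (induction A rule: infinite_finite_induct) (auto simp: filter_union_mset)

lemma size_filter_replicate:
  "size (filter_mset Q (replicate_mset n x)) = (if Q x then n else 0)"
  by (induction n) auto

lemma size_filter_PD:
  "size (filter_mset Q (PD S ent)) =
     (\<Sum>b\<in>ent ` S. \<Sum>d\<in>ent ` S. if b < d \<and> Q (b, ereal d) then mult_fin S ent b d else 0)
   + (\<Sum>b\<in>ent ` S. if Q (b, \<infinity>) then mult_inf S ent b else 0)"
  unfolding PD_def filter_union_mset size_union size_filter_sum
  by (auto intro!: sum.cong simp: size_filter_replicate)

lemma sum_mset_nonneg': "(\<forall>x\<in>#X. (0::real) \<le> x) \<Longrightarrow> 0 \<le> sum_mset X"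
  by (induction X) auto

lemma mem_size: "x \<in># M \<Longrightarrow> size M \<noteq> 0" by auto

lemma int_if0: "int (if P then x else 0) = (if P then int x else 0)" by simp

lemma size_filter_add: "size (filter_mset P (add_mset a M)) = size (filter_mset P M) + (if P a then 1 else 0)"
  by simp

lemma layer_cake:
  fixes X Y :: "real multiset"
  assumes "\<forall>x\<in>#X. 0 \<le> x" "\<forall>t. size (filter_mset (\<lambda>x. t < x) Y) \<le> size (filter_mset (\<lambda>x. t < x) X)"
  shows "sum_mset Y \<le> sum_mset X"
  using assms
proof (induction "size Y" arbitrary: X Y rule: less_induct)
  case less
  show ?case
  proof (cases "Y = {#}")
    case True then show ?thesis using sum_mset_nonneg'[OF less.prems(1)] by simp
  next
    case False
    define y where "y = Max (set_mset Y)"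
    have yY: "y \<in># Y" unfolding y_def using False by simp
    have ymax: "\<And>z. z \<in># Y \<Longrightarrow> z \<le> y" unfolding y_def by simp
    have "size (filter_mset (\<lambda>x. y - 1 < x) Y) \<ge> 1"
    proof -
      have "y \<in># filter_mset (\<lambda>x. y - 1 < x) Y" using yY by simp
      then have "size (filter_mset (\<lambda>x. y - 1 < x) Y) \<noteq> 0" by (rule mem_size)
      then show ?thesis by presburger
    qed
    then have "size (filter_mset (\<lambda>x. y - 1 < x) X) \<ge> 1" using less.prems(2) order_trans by blast
    then have XE: "X \<noteq> {#}" by auto
    define x where "x = Max (set_mset X)"
    have xX: "x \<in># X" unfolding x_def using XE by simp
    have xmax: "\<And>z. z \<in># X \<Longrightarrow> z \<le> x" unfolding x_def by simp
    have yx: "y \<le> x"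
    proof (rule ccontr)
      assume "\<not> y \<le> x"
      then have "y \<in># filter_mset (\<lambda>z. x < z) Y" using yY by simp
      then have "size (filter_mset (\<lambda>z. x < z) Y) \<noteq> 0" by (rule mem_size)
      moreover have "filter_mset (\<lambda>z. x < z) X = {#}" using xmax by (auto simp: filter_mset_eq_conv not_less)
      ultimately show False using less.prems(2) by (metis le_zero_eq size_empty)
    qed
    obtain Y' where Y': "Y = add_mset y Y'" using yY by (metis insert_DiffM)
    obtain X' where X': "X = add_mset x X'" using xX by (metis insert_DiffM)
    have cnt: "size (filter_mset (\<lambda>z. t < z) Y') \<le> size (filter_mset (\<lambda>z. t < z) X')" for t
    proof -
      have h: "size (filter_mset (\<lambda>z. t < z) Y') + (if t < y then 1 else 0) \<le> size (filter_mset (\<lambda>z. t < z) X') + (if t < x then 1 else 0)"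
        using less.prems(2) unfolding X' Y' size_filter_add by blast
      show ?thesis
      proof (cases "t < y")
        case True then show ?thesis using h yx by simp
      next
        case False
        then have fe: "filter_mset (\<lambda>z. t < z) Y' = {#}" using ymax unfolding Y'
          by (auto simp: filter_mset_eq_conv not_less intro: order_trans)
        show ?thesis by (simp only: fe size_empty le0)
      qed
    qed
    have "sum_mset Y' \<le> sum_mset X'"
      using less.hyps[of Y' X'] less.prems(1) cnt unfolding Y' X' by simp
    then show ?thesis unfolding X' Y' using yx by simp
  qed
qed

lemma inner_sum:
  fixes f :: "real \<Rightarrow> int"
  assumes "finite V"
  shows "(\<Sum>d\<in>V. if b < d \<and> (b \<le> a \<and> ereal a < ereal d) \<and> t < b then f d else 0)
       = (if t < b \<and> b \<le> a then (\<Sum>d\<in>{d\<in>V. a < d}. f d) else 0)"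
proof (cases "t < b \<and> b \<le> a")
  case True
  then have "(b < d \<and> (b \<le> a \<and> ereal a < ereal d) \<and> t < b) \<longleftrightarrow> a < d" for d by auto
  then show ?thesis using True assms by (simp add: sum.inter_filter)
next
  case False then show ?thesis by auto
qed

lemma pd_count:
  assumes fS: "finite S" and ta: "t \<le> a"
  shows "int (size (filter_mset (\<lambda>p. t < fst p) (filter_mset (\<lambda>(b, d). b \<le> a \<and> ereal a < d) (PD S ent))))
       = int (hrank (Qle S ent a) (Qle S ent a)) - int (hrank (Qle S ent t) (Qle S ent a))"
proof -
  define V where "V = ent ` S"
  have fV: "finite V" unfolding V_def using fS by simp
  define W where "W = {b\<in>V. t < b \<and> b \<le> a}"
  let ?Q = "\<lambda>p. (case p of (b, d) \<Rightarrow> b \<le> a \<and> ereal a < d) \<and> t < fst p"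
  have "int (size (filter_mset (\<lambda>p. t < fst p) (filter_mset (\<lambda>(b, d). b \<le> a \<and> ereal a < d) (PD S ent))))
      = int (size (filter_mset ?Q (PD S ent)))" by (simp add: filter_filter_mset)
  also have "\<dots> = (\<Sum>b\<in>V. \<Sum>d\<in>V. if b < d \<and> (b \<le> a \<and> ereal a < ereal d) \<and> t < b then int (mult_fin S ent b d) else 0)
      + (\<Sum>b\<in>V. if b \<le> a \<and> t < b then int (mult_inf S ent b) else 0)"
    unfolding size_filter_PD V_def by (simp only: of_nat_add of_nat_sum int_if0) simp
  also have "\<dots> = (\<Sum>b\<in>V. if t < b \<and> b \<le> a then (\<Sum>d\<in>{d\<in>V. a < d}. int (mult_fin S ent b d)) + int (mult_inf S ent b) else 0)"
    unfolding inner_sum[OF fV] sum.distrib[symmetric] by (intro sum.cong) auto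
  also have "\<dots> = (\<Sum>b\<in>W. (\<Sum>d\<in>{d\<in>V. a < d}. int (mult_fin S ent b d)) + int (mult_inf S ent b))"
    unfolding W_def by (rule sum.inter_filter[symmetric, OF fV])
  also have "\<dots> = (\<Sum>b\<in>W. hh S ent b (Qle S ent a))"
    unfolding V_def W_def by (intro sum.cong refl deaths_sum[OF fS]) auto
  also have "\<dots> = (\<Sum>b\<in>W. int (hrank (Qle S ent b) (Qle S ent a)) - int (hrank (Qlt S ent b) (Qle S ent a)))"
    unfolding hh_def ..
  also have "\<dots> = int (hrank (Qle S ent a) (Qle S ent a)) - int (hrank (Qle S ent t) (Qle S ent a))"
    unfolding W_def V_def by (rule telescope[OF fS ta, of "\<lambda>K. int (hrank K (Qle S ent a))"])
  finally show ?thesis .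
qed

lemma gcx_edges: "graph_on C G \<Longrightarrow> edges (graph_cx C G) = G"
  unfolding edges_def graph_cx_def graph_on_def by auto

lemma gcx_triangles: "graph_on C G \<Longrightarrow> triangles (graph_cx C G) = {}"
  unfolding triangles_def graph_cx_def graph_on_def by auto

lemma gcx_boundaries: assumes "graph_on C G" shows "boundaries (graph_cx C G) = {{}}"
  unfolding boundaries_def gcx_triangles[OF assms] by simp

lemma gcx_cycles: assumes "graph_on C G" shows "cycles (graph_cx C G) = Zg G"
  unfolding cycles_Zg gcx_edges[OF assms] ..

lemma gcx_hclass: assumes "graph_on C G" "c \<in> Zg G" shows "hclass (graph_cx C G) c = {c}"
  unfolding hclass_def gcx_cycles[OF assms(1)] gcx_boundaries[OF assms(1)]
  using assms(2) by (auto simp: symdiff_eq_iff)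

lemma gcx_H1: assumes "graph_on C G" shows "H1 (graph_cx C G) = (\<lambda>c. {c}) ` Zg G"
  unfolding H1_def gcx_cycles[OF assms] using gcx_hclass[OF assms] by (intro image_cong refl) auto

lemma H1_self: assumes "L \<subseteq> S" "finite S" shows "card (H1 L) = 2 ^ hrank L L"
proof -
  have fL: "finite L" using rev_finite_subset[OF assms(2,1)] .
  have "induced L L ` H1 L = H1 L" using induced_image[OF order_refl fL] H1_coset[OF fL] by simp
  then show ?thesis using hrank_eq(1,3)[OF order_refl assms] by simp
qed

lemma size_filter_img_set:
  assumes "finite A"
  shows "size (filter_mset P (image_mset f (mset_set A))) = card {x\<in>A. P (f x)}"
  unfolding filter_mset_image_mset size_image_mset filter_mset_mset_set[OF assms] by simp

theorem mainTheorem8: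
  fixes C :: "'a set" and S G T :: "'a set set" and ent :: "'a set \<Rightarrow> real" and \<alpha> :: real
  assumes filt: "filtration C S ent"
    and alpha: "0 \<le> \<alpha>"
    and span: "spans C G (Qle S ent \<alpha>)"
    and iso: "bij_betw (induced (graph_cx C G) (Qle S ent \<alpha>)) (H1 (graph_cx C G)) (H1 (Qle S ent \<alpha>))"
    and mst: "is_MST C S ent T"
  shows "total_len ent G \<ge> total_len ent (MST_trunc ent T \<alpha>)
           + 2 * (\<Sum>p\<in>#filter_mset (\<lambda>(b, d). b \<le> \<alpha> \<and> ereal \<alpha> < d) (PD S ent). fst p)"
proof -
  have fC: "finite C" and fS: "finite S" and ent0: "\<And>\<sigma>. \<sigma> \<in> S \<Longrightarrow> 0 \<le> ent \<sigma>"
    using filt_facts[OF filt] by auto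
  define Qa where "Qa = Qle S ent \<alpha>"
  define R where "R x = hrank (Qle S ent x) Qa" for x
  define Mf where "Mf = filter_mset (\<lambda>(b, d). b \<le> \<alpha> \<and> ereal \<alpha> < d) (PD S ent)"
  define MT where "MT = MST_trunc ent T \<alpha>"
  have QaS: "Qa \<subseteq> S" unfolding Qa_def by (rule Qle_sub)
  have gG: "graph_on C G" and GQ: "G \<subseteq> Qa" using span unfolding spans_def Qa_def by auto
  have GE: "G \<subseteq> edges Qa" using gG GQ unfolding graph_on_def edges_def by auto
  have Gent: "\<And>e. e \<in> G \<Longrightarrow> ent e \<le> \<alpha> \<and> e \<in> S" using GQ unfolding Qa_def Qle_def by auto
  have finG: "finite G" by (rule graph_on_finite[OF fC gG])
  have b0G: "card (comps C G) = card (comps C (edges Qa))"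
    using span unfolding spans_def Qa_def by (meson bij_betw_same_card)
  have ZGQ: "Zg G \<subseteq> cycles Qa" unfolding cycles_Zg by (rule Zg_mono[OF GE])
  have injG: "inj_on (coset (BB Qa)) (Zg G)"
  proof (rule inj_onI)
    fix c1 c2 assume c: "c1 \<in> Zg G" "c2 \<in> Zg G" "coset (BB Qa) c1 = coset (BB Qa) c2"
    have fQa: "finite Qa" using rev_finite_subset[OF fS QaS] .
    have ind: "induced (graph_cx C G) Qa {c} = coset (BB Qa) c" if "c \<in> Zg G" for c
      unfolding induced_def using hclass_coset[OF fQa] ZGQ that by auto
    have "{c1} \<in> H1 (graph_cx C G)" "{c2} \<in> H1 (graph_cx C G)" using c gcx_H1[OF gG] by auto
    moreover have "induced (graph_cx C G) Qa {c1} = induced (graph_cx C G) Qa {c2}" using ind c by simp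
    ultimately have "{c1} = {c2}" using iso unfolding Qa_def bij_betw_def inj_on_def by blast
    then show "c1 = c2" by simp
  qed
  have cardZG: "card (Zg G) = 2 ^ R \<alpha>"
  proof -
    have "card (H1 (graph_cx C G)) = card (Zg G)"
      unfolding gcx_H1[OF gG] by (rule card_image) (auto intro: inj_onI)
    moreover have "card (H1 (graph_cx C G)) = card (H1 Qa)"
      using iso unfolding Qa_def by (rule bij_betw_same_card)
    moreover have "card (H1 Qa) = 2 ^ hrank Qa Qa" by (rule H1_self[OF QaS fS])
    ultimately show ?thesis unfolding R_def Qa_def by simp
  qed
  have "(2::nat) ^ (card G + card (comps C G)) = 2 ^ (R \<alpha> + card C)"
    unfolding power_add using cycle_rank[OF fC gG] cardZG by simp
  then have rankG: "card G + card (comps C G) = R \<alpha> + card C" by (rule pow2_inj)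
  have key: "int (card {e\<in>G. t < ent e}) \<ge> int (card {e\<in>MT. t < ent e}) + int (size (filter_mset (\<lambda>p. t < fst p) Mf))"
    for t
  proof (cases "t < \<alpha>")
    case False
    have h1: "{e\<in>G. t < ent e} = {}" using Gent False by force
    have h2: "{e\<in>MT. t < ent e} = {}" using False unfolding MT_def MST_trunc_def elen_def by auto
    have h3: "filter_mset (\<lambda>p. t < fst p) Mf = {#}"
      unfolding Mf_def using False by (auto simp: filter_mset_eq_conv)
    show ?thesis by (simp only: h1 h2 h3 card.empty size_empty of_nat_0 add_0 order_refl)
  next
    case True
    define Gt where "Gt = {e\<in>G. ent e \<le> t}"
    define Qt where "Qt = Qle S ent t"
    have QtQa: "Qt \<subseteq> Qa" unfolding Qt_def Qa_def using True by (intro Qle_mono) simp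
    have fQt: "finite Qt" using rev_finite_subset[OF fS Qle_sub] unfolding Qt_def .
    have gGt: "graph_on C Gt" using gG unfolding Gt_def graph_on_def by auto
    have GtE: "Gt \<subseteq> edges Qt" using GE Gent unfolding Gt_def Qt_def edges_def Qle_def by auto
    have finGt: "finite Gt" using finG unfolding Gt_def by simp
    have sZ: "sg (Zg Gt)" by (rule sg_Zg[OF finGt])
    have cZ: "card (Zg Gt) = 2 ^ dimZ2 (Zg Gt)" by (rule sg_card_pow2[OF sZ Zg_Pow finGt])
    have "card (Zg Gt) \<le> 2 ^ R t"
    proof -
      have "Zg Gt \<subseteq> Zg G" unfolding Gt_def by (rule Zg_mono) auto
      then have "card (Zg Gt) = card (coset (BB Qa) ` Zg Gt)"
        using card_image[OF inj_on_subset[OF injG]] by simp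
      also have "\<dots> \<le> card (coset (BB Qa) ` cycles Qt)"
      proof (rule card_mono)
        have "finite (edges Qt)" using fQt unfolding edges_def by simp
        then have "finite (cycles Qt)" using rev_finite_subset[OF _ cycles_Pow[OF order_refl]] by blast
        then show "finite (coset (BB Qa) ` cycles Qt)" by simp
        have "Zg Gt \<subseteq> cycles Qt" unfolding cycles_Zg by (rule Zg_mono[OF GtE])
        then show "coset (BB Qa) ` Zg Gt \<subseteq> coset (BB Qa) ` cycles Qt" by blast
      qed
      also have "\<dots> = card (induced Qt Qa ` H1 Qt)"
        using induced_image[OF QtQa rev_finite_subset[OF fS QaS]] by simp
      also have "\<dots> = 2 ^ R t"
        using hrank_eq(1,3)[OF QtQa QaS fS] unfolding R_def Qt_def by simp
      finally show ?thesis .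
    qed
    then have zt: "dimZ2 (Zg Gt) \<le> R t" using cZ by (simp add: power_le_imp_le_exp)
    have "(2::nat) ^ (card Gt + card (comps C Gt)) = 2 ^ (dimZ2 (Zg Gt) + card C)"
      unfolding power_add using cycle_rank[OF fC gGt] cZ by simp
    then have rankGt: "card Gt + card (comps C Gt) = dimZ2 (Zg Gt) + card C" by (rule pow2_inj)
    have bGt: "card (comps C (edges Qt)) \<le> card (comps C Gt)"
      by (rule comps_card_mono[OF fC]) (use GtE in \<open>auto intro: conn_edge\<close>)
    have cG: "card {e\<in>G. t < ent e} = card G - card Gt"
    proof -
      have "{e\<in>G. t < ent e} = G - Gt" unfolding Gt_def by auto
      moreover have "Gt \<subseteq> G" unfolding Gt_def by auto
      ultimately show ?thesis using finG by (simp add: card_Diff_subset finite_subset)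
    qed
    have GtG: "card Gt \<le> card G" using finG unfolding Gt_def by (intro card_mono) auto
    have m1: "card {e\<in>T. ent e \<le> \<alpha>} + card (comps C (edges Qa)) = card C"
      unfolding Qa_def by (rule mst_count[OF filt mst])
    have m2: "card {e\<in>T. ent e \<le> t} + card (comps C (edges Qt)) = card C"
      unfolding Qt_def by (rule mst_count[OF filt mst])
    have finT: "finite T" using mst unfolding is_MST_def is_tree_def using graph_on_finite[OF fC] by blast
    have cMT: "card {e\<in>MT. t < ent e} = card {e\<in>T. ent e \<le> \<alpha>} - card {e\<in>T. ent e \<le> t}"
    proof -
      have "{e\<in>MT. t < ent e} = {e\<in>T. ent e \<le> \<alpha>} - {e\<in>T. ent e \<le> t}"
        unfolding MT_def MST_trunc_def elen_def by auto
      moreover have "{e\<in>T. ent e \<le> t} \<subseteq> {e\<in>T. ent e \<le> \<alpha>}" using True by auto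
      ultimately show ?thesis using finT by (simp add: card_Diff_subset)
    qed
    have MTle: "card {e\<in>T. ent e \<le> t} \<le> card {e\<in>T. ent e \<le> \<alpha>}"
      using finT True by (intro card_mono) auto
    have pd: "int (size (filter_mset (\<lambda>p. t < fst p) Mf)) = int (R \<alpha>) - int (R t)"
      unfolding Mf_def R_def Qa_def by (rule pd_count[OF fS]) (use True in simp)
    show ?thesis
      using cG cMT pd rankG rankGt zt bGt b0G m1 m2 GtG MTle by simp
  qed
  define X where "X = image_mset ent (mset_set G)"
  define Y where "Y = image_mset ent (mset_set MT) + image_mset fst Mf"
  have finMT: "finite MT"
  proof -
    have "finite T" using mst unfolding is_MST_def is_tree_def using graph_on_finite[OF fC] by blast
    then show ?thesis unfolding MT_def MST_trunc_def by simp
  qed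
  have "sum_mset Y \<le> sum_mset X"
  proof (rule layer_cake)
    show "\<forall>x\<in>#X. 0 \<le> x" unfolding X_def using finG Gent ent0 by auto
    show "\<forall>t. size (filter_mset (\<lambda>x. t < x) Y) \<le> size (filter_mset (\<lambda>x. t < x) X)"
    proof
      fix t
      have "size (filter_mset (\<lambda>x. t < x) Y) = card {e\<in>MT. t < ent e} + size (filter_mset (\<lambda>p. t < fst p) Mf)"
        unfolding Y_def filter_union_mset size_union size_filter_img_set[OF finMT]
        by (simp add: filter_mset_image_mset)
      moreover have "size (filter_mset (\<lambda>x. t < x) X) = card {e\<in>G. t < ent e}"
        unfolding X_def by (rule size_filter_img_set[OF finG])
      ultimately show "size (filter_mset (\<lambda>x. t < x) Y) \<le> size (filter_mset (\<lambda>x. t < x) X)"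
        using key[of t] by simp
    qed
  qed
  moreover have "total_len ent G = 2 * sum_mset X"
    unfolding total_len_def elen_def X_def sum_unfold_sum_mset[symmetric] by (simp add: sum_distrib_left)
  moreover have "total_len ent MT = 2 * sum_mset (image_mset ent (mset_set MT))"
    unfolding total_len_def elen_def sum_unfold_sum_mset[symmetric] by (simp add: sum_distrib_left)
  moreover have "sum_mset Y = sum_mset (image_mset ent (mset_set MT)) + (\<Sum>p\<in>#Mf. fst p)"
    unfolding Y_def by simp
  ultimately show ?thesis unfolding MT_def Mf_def by simp
qed

end
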